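(* For every $m\ge1$, the ideal $I^{(k,r)}_m\subset V$ is stable under $\mathcal H_n^{(k,r)}$, i.e. it is a subrepresentation of $V$. (One has $I^{(k,r)}_1=I^{(k,r)}\subset I^{(k,r)}_2\subset\cdots\subset I^{(k,r)}_{m_0+1}=V$ with $m_0=[\frac n{k+1}]$.)
   Context: Let $\tilde{\mathbb K}=\mathbb C(t^{1/2},q)$. The double affine Hecke algebra $\mathcal H_n$ of type $GL_n$ is the $\tilde{\mathbb K}$-algebra generated by $X_i^{\pm1},Y_i^{\pm1}$ ($1\le i\le n$), $T_j$ ($1\le j\le n-1$) with relations: $X$'s commute, $Y$'s commute; $(T_i-t^{1/2})(T_i+t^{-1/2})=0$; braid relations for the $T_i$; $T_iX_iT_i=X_{i+1}$; $T_iX_j=X_jT_i$ ($j\ne i,i+1$); $T_i^{-1}Y_iT_i^{-1}=Y_{i+1}$; $T_iY_j=Y_jT_i$ ($j\ne i,i+1$); $Y_2^{-1}X_1Y_2X_1^{-1}=T_1^2$; $Y_i\tilde X=q\tilde XY_i$ ($\tilde X=\prod X_i$); $X_i\tilde Y=q^{-1}\tilde YX_i$ ($\tilde Y=\prod Y_i$). It acts on $U=\tilde{\mathbb K}[x_1^{\pm1},\dots,x_n^{\pm1}]$ by $X_i\mapsto x_i$, $T_i\mapsto t^{1/2}s_i+\frac{t^{1/2}-t^{-1/2}}{x_i/x_{i+1}-1}(s_i-1)$, $Y_i\mapsto T_i\cdots T_{n-1}\omega T_1^{-1}\cdots T_{i-1}^{-1}$, with $s_i$ swapping $x_i,x_{i+1}$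 and $(\omega f)(x)=f(qx_n,x_1,\dots,x_{n-1})$. Fix $1\le k\le n-1$, $r\ge2$, $g=\gcd(k+1,r-1)$, $\tau=e^{2\pi\sqrt{-1}/(r-1)}$, specialization $(\ast)$: $t=u^{(r-1)/g}$, $q=\tau u^{-(k+1)/g}$. $\mathbb K$, $\mathcal H_n^{(k,r)}$, $V=\mathbb K[x_1^{\pm1},\dots,x_n^{\pm1}]$ are the images under $(\ast)$ of the elements of $\tilde{\mathbb K}$, $\mathcal H_n$, $U$ regular at $(\ast)$. $Z^{(k,r)}_m$ is the set of $z\in\mathbb K^n$ for which there exist pairwise distinct indices $i_{l,a}$ ($1\le l\le m$, $1\le a\le k+1$) and $s_{l,a}\in\mathbb Z_{\ge0}$ ($1\le a\le k$) with $z_{i_{l,a+1}}=z_{i_{l,a}}tq^{s_{l,a}}$, $\sum_{a=1}^ks_{l,a}\le r-2$ for each $l$, and $i_{l,a}<i_{l,a+1}$ whenever $s_{l,a}=0$; $I^{(k,r)}_m=\{f\in V:f(z)=0\ \forall z\in Z^{(k,r)}_m\}$, and $I^{(k,r)}=I^{(k,r)}_1$. *)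

theory Defs
  imports Complex_Main "HOL-Library.Poly_Mapping"
    "HOL-Computational_Algebra.Polynomial" "HOL-Computational_Algebra.Fraction_Field"
begin

text \<open>K is the image of C(t^(1/2),q) under the specialization
  t = u^((r-1)/g), q = tau u^(-(k+1)/g).  Writing w = u^(1/(2g)) this image is
  C(w^(r-1), w^(2(k+1))) = C(v) with v = w^d, d = gcd(r-1, 2(k+1)); we model K
  as the rational function field C(v) = complex poly fract, in which
  t^(1/2) = v^((r-1)/d) and q = tau v^(-2(k+1)/d).\<close>

type_synonym kf = "complex poly fract"

definition vvar :: kf where "vvar = Fract [:0, 1:] 1"

definition kconst :: "complex \<Rightarrow> kf" where "kconst c = Fract [:c:] 1"

definition dd :: "nat \<Rightarrow> nat \<Rightarrow> nat" where
  "dd k r = gcd (r - 1) (2 * (k + 1))"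

definition gg :: "nat \<Rightarrow> nat \<Rightarrow> nat" where
  "gg k r = gcd (k + 1) (r - 1)"

definition tau :: "nat \<Rightarrow> complex" where
  "tau r = exp (2 * pi * \<i> / of_nat (r - 1))"

definition sqt :: "nat \<Rightarrow> nat \<Rightarrow> kf" where
  "sqt k r = vvar ^ ((r - 1) div dd k r)"

definition tt :: "nat \<Rightarrow> nat \<Rightarrow> kf" where
  "tt k r = (sqt k r)^2"

definition qq :: "nat \<Rightarrow> nat \<Rightarrow> kf" where
  "qq k r = kconst (tau r) * inverse (vvar ^ ((2 * (k + 1)) div dd k r))"

type_synonym lpoly = "(nat \<Rightarrow>\<^sub>0 int) \<Rightarrow>\<^sub>0 kf"

definition lconst :: "kf \<Rightarrow> lpoly" where
  "lconst c = Poly_Mapping.single 0 c"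

definition xpow :: "nat \<Rightarrow> int \<Rightarrow> lpoly" where
  "xpow j c = Poly_Mapping.single (Poly_Mapping.single j c) 1"

definition xv :: "nat \<Rightarrow> lpoly" where "xv j = xpow j 1"

definition Vset :: "nat \<Rightarrow> lpoly set" where
  "Vset n = {f. \<forall>e \<in> Poly_Mapping.keys f. Poly_Mapping.keys e \<subseteq> {1..n}}"

definition leval :: "nat \<Rightarrow> lpoly \<Rightarrow> (nat \<Rightarrow> kf) \<Rightarrow> kf" where
  "leval n f z = (\<Sum>e \<in> Poly_Mapping.keys f. Poly_Mapping.lookup f e * (\<Prod>i \<in> {1..n}. z i powi Poly_Mapping.lookup e i))"

definition msubst :: "(nat \<Rightarrow> nat) \<Rightarrow> ((nat \<Rightarrow>\<^sub>0 int) \<Rightarrow> kf) \<Rightarrow> lpoly \<Rightarrow> lpoly" where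
  "msubst \<sigma> coef f = (\<Sum>e \<in> Poly_Mapping.keys f. lconst (Poly_Mapping.lookup f e * coef e) *
                          (\<Prod>j \<in> Poly_Mapping.keys e. xpow (\<sigma> j) (Poly_Mapping.lookup e j)))"

definition swp :: "nat \<Rightarrow> nat \<Rightarrow> nat" where
  "swp i j = (if j = i then i + 1 else if j = i + 1 then i else j)"

definition sop :: "nat \<Rightarrow> lpoly \<Rightarrow> lpoly" where
  "sop i f = msubst (swp i) (\<lambda>_. 1) f"

text \<open>(\<omega> f)(x) = f(q x_n, x_1, ..., x_(n-1)):  x_1 \<mapsto> q x_n, x_j \<mapsto> x_(j-1)\<close>
definition omega :: "nat \<Rightarrow> nat \<Rightarrow> nat \<Rightarrow> lpoly \<Rightarrow> lpoly" where
  "omega n k r f = msubst (\<lambda>j. if j = 1 then n else j - 1)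
                      (\<lambda>e. qq k r powi Poly_Mapping.lookup e 1) f"

text \<open>inverse of \<omega>: (\<omega>^-1 f)(x) = f(x_2, ..., x_n, q^-1 x_1)\<close>
definition omega_inv :: "nat \<Rightarrow> nat \<Rightarrow> nat \<Rightarrow> lpoly \<Rightarrow> lpoly" where
  "omega_inv n k r f = msubst (\<lambda>j. if j = n then 1 else j + 1)
                      (\<lambda>e. qq k r powi (- Poly_Mapping.lookup e n)) f"

text \<open>T_i = t^(1/2) s_i + (t^(1/2) - t^(-1/2)) / (x_i/x_(i+1) - 1) (s_i - 1);
  the division is the exact division
  (s_i - 1) f / (x_i/x_(i+1) - 1) = x_(i+1) (s_i f - f) / (x_i - x_(i+1)).\<close>
definition Top :: "nat \<Rightarrow> nat \<Rightarrow> nat \<Rightarrow> lpoly \<Rightarrow> lpoly" where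
  "Top k r i f = lconst (sqt k r) * sop i f +
     lconst (sqt k r - inverse (sqt k r)) *
       (THE g. (xv i - xv (i + 1)) * g = xv (i + 1) * (sop i f - f))"

text \<open>T_i^-1 = T_i - (t^(1/2) - t^(-1/2)) (from the quadratic relation)\<close>
definition Tinv :: "nat \<Rightarrow> nat \<Rightarrow> nat \<Rightarrow> lpoly \<Rightarrow> lpoly" where
  "Tinv k r i f = Top k r i f - lconst (sqt k r - inverse (sqt k r)) * f"

definition Xop :: "nat \<Rightarrow> lpoly \<Rightarrow> lpoly" where "Xop i f = xpow i 1 * f"
definition Xinv :: "nat \<Rightarrow> lpoly \<Rightarrow> lpoly" where "Xinv i f = xpow i (-1) * f"

definition Yop :: "nat \<Rightarrow> nat \<Rightarrow> nat \<Rightarrow> nat \<Rightarrow> lpoly \<Rightarrow> lpoly" where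
  "Yop n k r i = foldr (\<circ>) (map (Top k r) [i..<n]) id \<circ> omega n k r \<circ>
                 foldr (\<circ>) (map (Tinv k r) [1..<i]) id"

definition Yinv :: "nat \<Rightarrow> nat \<Rightarrow> nat \<Rightarrow> nat \<Rightarrow> lpoly \<Rightarrow> lpoly" where
  "Yinv n k r i = foldr (\<circ>) (map (Top k r) (rev [1..<i])) id \<circ> omega_inv n k r \<circ>
                  foldr (\<circ>) (map (Tinv k r) (rev [i..<n])) id"

text \<open>The operators by which H_n^(k,r) acts on V: the K-algebra of operators
  generated by the images of X_i^{\<pm>1}, T_j, Y_i^{\<pm>1}.\<close>
inductive_set hecke_ops :: "nat \<Rightarrow> nat \<Rightarrow> nat \<Rightarrow> (lpoly \<Rightarrow> lpoly) set"
  for n k r where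
  gen_X: "i \<in> {1..n} \<Longrightarrow> Xop i \<in> hecke_ops n k r"
| gen_Xinv: "i \<in> {1..n} \<Longrightarrow> Xinv i \<in> hecke_ops n k r"
| gen_T: "j \<in> {1..n-1} \<Longrightarrow> Top k r j \<in> hecke_ops n k r"
| gen_Y: "i \<in> {1..n} \<Longrightarrow> Yop n k r i \<in> hecke_ops n k r"
| gen_Yinv: "i \<in> {1..n} \<Longrightarrow> Yinv n k r i \<in> hecke_ops n k r"
| scal: "(\<lambda>f. lconst c * f) \<in> hecke_ops n k r"
| add: "h1 \<in> hecke_ops n k r \<Longrightarrow> h2 \<in> hecke_ops n k r \<Longrightarrow>
        (\<lambda>f. h1 f + h2 f) \<in> hecke_ops n k r"
| comp: "h1 \<in> hecke_ops n k r \<Longrightarrow> h2 \<in> hecke_ops n k r \<Longrightarrow>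
        h1 \<circ> h2 \<in> hecke_ops n k r"

definition Zset :: "nat \<Rightarrow> nat \<Rightarrow> nat \<Rightarrow> nat \<Rightarrow> (nat \<Rightarrow> kf) set" where
  "Zset n k r m = {z. (\<forall>i \<in> {1..n}. z i \<noteq> 0) \<and>
     (\<exists>(idx :: nat \<Rightarrow> nat \<Rightarrow> nat) (s :: nat \<Rightarrow> nat \<Rightarrow> nat).
        inj_on (\<lambda>(l, a). idx l a) ({1..m} \<times> {1..k+1}) \<and>
        (\<forall>l \<in> {1..m}. \<forall>a \<in> {1..k+1}. idx l a \<in> {1..n}) \<and>
        (\<forall>l \<in> {1..m}. \<forall>a \<in> {1..k}.
            z (idx l (a + 1)) = z (idx l a) * tt k r * qq k r ^ s l a) \<and>
        (\<forall>l \<in> {1..m}. (\<Sum>a = 1..k. s l a) \<le> r - 2) \<and>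
        (\<forall>l \<in> {1..m}. \<forall>a \<in> {1..k}. s l a = 0 \<longrightarrow> idx l a < idx l (a + 1)))}"

definition Iideal :: "nat \<Rightarrow> nat \<Rightarrow> nat \<Rightarrow> nat \<Rightarrow> lpoly set" where
  "Iideal n k r m = {f \<in> Vset n. \<forall>z \<in> Zset n k r m. leval n f z = 0}"

end

theory Submission
  imports Defs "HOL-Analysis.Complex_Transcendental"
begin

lemma vvar_pow: "vvar ^ a = Fract ([:0,1:]^a) 1"
  by (induct a) (simp_all add: vvar_def mult_fract One_fract_def)

lemma vvar_nz: "vvar \<noteq> 0"
  by (simp add: vvar_def Zero_fract_def eq_fract)

lemma kconst_mult: "kconst (a*b) = kconst a * kconst b"
  by (simp add: kconst_def mult_fract mult.commute)

lemma kconst_one: "kconst 1 = 1"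
  by (simp add: kconst_def One_fract_def one_pCons)

lemma kconst_power: "kconst (a^j) = kconst a ^ j"
  by (induct j) (simp_all add: kconst_one kconst_mult)

lemma kconst_inj: "kconst a = kconst b \<Longrightarrow> a = b"
  by (simp add: kconst_def eq_fract)

lemma infinite_kf: "infinite (UNIV :: kf set)"
proof
  assume "finite (UNIV :: kf set)"
  hence "finite (range kconst)" by (rule finite_subset[rotated]) auto
  moreover have "inj kconst" by (auto intro: injI kconst_inj)
  ultimately have "finite (UNIV :: complex set)" using finite_imageD by blast
  thus False using infinite_UNIV_char_0 by blast
qed

lemma kconst_vvar_eq:
  assumes "kconst c * vvar ^ A = vvar ^ B"
  shows "A = B \<and> c = 1"
proof -
  have "Fract ([:c:] * [:0,1:]^A) 1 = Fract ([:0,1:]^B) 1"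
    using assms by (simp add: kconst_def vvar_pow mult_fract)
  hence "[:c:] * [:0,1:]^A = [:0,1:]^B" by (simp add: eq_fract)
  hence "monom c A = monom 1 B" by (simp add: monom_altdef)
  hence "coeff (monom c A) B = coeff (monom 1 B) B" by simp
  hence "(if A = B then c else 0) = 1" by (simp add: coeff_monom)
  thus ?thesis by (auto split: if_splits)
qed

lemma dd_pos: "dd k r > 0" by (simp add: dd_def)
lemma dd_dvd1: "dd k r dvd (r - 1)" by (simp add: dd_def)
lemma dd_dvd2: "dd k r dvd 2 * (k + 1)" by (simp add: dd_def)

lemma A0_pos: "2 \<le> r \<Longrightarrow> (r - 1) div dd k r \<ge> 1"
proof -
  assume r: "2 \<le> r"
  obtain c where c: "r - 1 = dd k r * c" using dd_dvd1 by blast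
  have "c \<noteq> 0" using c r by (cases c) auto
  thus ?thesis using c dd_pos[of k r] by simp
qed

lemma tau_pow_eq1: "1 \<le> r - 1 \<Longrightarrow> tau r ^ S = 1 \<longleftrightarrow> (r - 1) dvd S"
proof -
  assume h: "1 \<le> r - 1"
  have "tau r ^ S = exp (of_nat S * (2 * pi * \<i> / of_nat (r - 1)))"
    unfolding tau_def by (rule exp_of_nat_mult[symmetric])
  also have "\<dots> = exp (2 * complex_of_real pi * \<i> * complex_of_nat S / complex_of_nat (r - 1))"
    by (simp add: field_simps)
  finally show ?thesis using complex_root_unity_eq_1[OF h, of S] by simp
qed

lemma tq_pow: "tt k r ^ j * qq k r ^ S =
   kconst (tau r ^ S) * vvar ^ (2 * ((r - 1) div dd k r) * j) * inverse (vvar ^ ((2 * (k + 1)) div dd k r * S))"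
  by (simp add: tt_def sqt_def qq_def power_mult_distrib kconst_power power_mult[symmetric]
      power_inverse mult_ac)

lemma mult_inv_eq1: "(x::'a::field) * inverse y = 1 \<Longrightarrow> x = y"
  by (metis inverse_unique inverse_inverse_eq)

lemma tq_ne1:
  assumes r: "2 \<le> r" and j: "1 \<le> j" and S: "S \<le> r - 2"
  shows "tt k r ^ j * qq k r ^ S \<noteq> 1"
proof
  assume "tt k r ^ j * qq k r ^ S = 1"
  hence "kconst (tau r ^ S) * vvar ^ (2 * ((r - 1) div dd k r) * j) * inverse (vvar ^ ((2 * (k + 1)) div dd k r * S)) = 1"
    by (simp only: tq_pow)
  hence "kconst (tau r ^ S) * vvar ^ (2 * ((r - 1) div dd k r) * j) = vvar ^ ((2 * (k + 1)) div dd k r * S)"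
    by (rule mult_inv_eq1)
  from kconst_vvar_eq[OF this] have e: "2 * ((r - 1) div dd k r) * j = (2 * (k + 1)) div dd k r * S"
    and t: "tau r ^ S = 1" by auto
  from t r have "(r - 1) dvd S" using tau_pow_eq1[of r S] by simp
  with S r have "S = 0" by (cases "S = 0") (auto dest: dvd_imp_le)
  with e have "((r - 1) div dd k r) * j = 0" by simp
  with A0_pos[OF r, of k] j show False by simp
qed

lemma tt_ne1: "2 \<le> r \<Longrightarrow> tt k r \<noteq> 1"
  using tq_ne1[of r 1 0 k] by simp

lemma sqt_nz: "sqt k r \<noteq> 0" by (simp add: sqt_def vvar_nz)
lemma tt_nz: "tt k r \<noteq> 0" by (simp add: tt_def sqt_nz)
lemma qq_nz: "qq k r \<noteq> 0"
proof -
  have "kconst (tau r) \<noteq> 0"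
  proof
    assume "kconst (tau r) = 0"
    hence "kconst (tau r) = kconst 0" by (simp add: kconst_def Zero_fract_def)
    hence "tau r = 0" by (rule kconst_inj)
    thus False by (simp add: tau_def)
  qed
  thus ?thesis by (simp add: qq_def vvar_nz)
qed

lemma tq_cycle:
  assumes r: "2 \<le> r"
  shows "tt k r ^ (k + 1) * qq k r ^ (r - 1) = 1"
proof -
  have t: "tau r ^ (r - 1) = 1" using tau_pow_eq1[of r "r - 1"] r by simp
  obtain a where a: "r - 1 = dd k r * a" using dd_dvd1 by blast
  obtain b where b: "2 * (k + 1) = dd k r * b" using dd_dvd2 by blast
  have 1: "(r - 1) div dd k r = a" unfolding a using dd_pos[of k r] by simp
  have 2: "(2 * (k + 1)) div dd k r = b" unfolding b using dd_pos[of k r] by simp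
  have "dd k r * (2 * a * (k + 1)) = (dd k r * a) * (2 * (k + 1))" by (simp add: algebra_simps)
  also have "\<dots> = (r - 1) * (dd k r * b)" by (simp only: a b)
  also have "\<dots> = dd k r * (b * (r - 1))" by (simp add: mult_ac)
  finally have 3: "2 * a * (k + 1) = b * (r - 1)" using dd_pos[of k r] by simp
  have "tt k r ^ (k + 1) * qq k r ^ (r - 1) = kconst 1 * vvar ^ (b * (r - 1)) * inverse (vvar ^ (b * (r - 1)))"
    unfolding tq_pow t 1 2 3 by (simp only:)
  thus ?thesis using vvar_nz by (simp add: kconst_one)
qed

definition lin :: "((nat \<Rightarrow>\<^sub>0 int) \<Rightarrow> kf) \<Rightarrow> lpoly \<Rightarrow> kf" where
  "lin \<phi> f = (\<Sum>e \<in> Poly_Mapping.keys f. Poly_Mapping.lookup f e * \<phi> e)"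

lemma lin_add: "lin \<phi> (f + g) = lin \<phi> f + lin \<phi> g"
  unfolding lin_def by (rule setsum_keys_plus_distrib) (auto simp: algebra_simps)

lemma lin_zero: "lin \<phi> 0 = 0" by (simp add: lin_def)

lemma lin_single: "lin \<phi> (Poly_Mapping.single e c) = c * \<phi> e"
  by (simp add: lin_def)

lemma lin_uminus: "lin \<phi> (- f) = - lin \<phi> f"
  by (simp add: lin_def sum_negf)

lemma lin_diff: "lin \<phi> (f - g) = lin \<phi> f - lin \<phi> g"
  using lin_add[of \<phi> f "- g"] lin_uminus[of \<phi> g] by simp

lemma lin_sum: "lin \<phi> (\<Sum>i\<in>I. F i) = (\<Sum>i\<in>I. lin \<phi> (F i))"
  by (induct I rule: infinite_finite_induct) (simp_all add: lin_zero lin_add)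

lemma poly_expand: "f = (\<Sum>e \<in> Poly_Mapping.keys f. Poly_Mapping.single e (Poly_Mapping.lookup f e))"
proof (rule poly_mapping_eqI)
  fix k
  have "Poly_Mapping.lookup (\<Sum>e \<in> Poly_Mapping.keys f. Poly_Mapping.single e (Poly_Mapping.lookup f e)) k
     = (\<Sum>e \<in> Poly_Mapping.keys f. (if e = k then Poly_Mapping.lookup f e else 0))"
    by (simp add: lookup_sum lookup_single when_def)
  also have "\<dots> = Poly_Mapping.lookup f k"
    by (simp add: in_keys_iff)
  finally show "Poly_Mapping.lookup f k = Poly_Mapping.lookup (\<Sum>e \<in> Poly_Mapping.keys f. Poly_Mapping.single e (Poly_Mapping.lookup f e)) k" by simp
qed

lemma lin_mult:
  assumes hom: "\<And>a b. \<phi> (a + b) = \<phi> a * \<phi> b"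
  shows "lin \<phi> (f * g) = lin \<phi> f * lin \<phi> g"
proof -
  let ?A = "Poly_Mapping.keys f" and ?B = "Poly_Mapping.keys g"
  have "f * g = (\<Sum>a\<in>?A. Poly_Mapping.single a (Poly_Mapping.lookup f a)) * (\<Sum>b\<in>?B. Poly_Mapping.single b (Poly_Mapping.lookup g b))"
    using poly_expand[of f] poly_expand[of g] by simp
  also have "\<dots> = (\<Sum>a\<in>?A. \<Sum>b\<in>?B. Poly_Mapping.single (a + b) (Poly_Mapping.lookup f a * Poly_Mapping.lookup g b))"
    by (simp add: sum_distrib_left sum_distrib_right mult_single) (rule sum.swap)
  finally have "lin \<phi> (f * g) = (\<Sum>a\<in>?A. \<Sum>b\<in>?B. Poly_Mapping.lookup f a * Poly_Mapping.lookup g b * \<phi> (a + b))"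
    by (simp add: lin_sum lin_single)
  also have "\<dots> = (\<Sum>a\<in>?A. \<Sum>b\<in>?B. (Poly_Mapping.lookup f a * \<phi> a) * (Poly_Mapping.lookup g b * \<phi> b))"
    by (simp add: hom mult_ac)
  also have "\<dots> = lin \<phi> f * lin \<phi> g"
    by (simp add: lin_def sum_distrib_left sum_distrib_right) (rule sum.swap)
  finally show ?thesis .
qed

definition mmon :: "nat \<Rightarrow> (nat \<Rightarrow> kf) \<Rightarrow> (nat \<Rightarrow>\<^sub>0 int) \<Rightarrow> kf" where
  "mmon n z e = (\<Prod>i \<in> {1..n}. z i powi Poly_Mapping.lookup e i)"

lemma leval_lin: "leval n f z = lin (mmon n z) f"
  by (simp add: leval_def lin_def mmon_def)

definition nzv :: "nat \<Rightarrow> (nat \<Rightarrow> kf) \<Rightarrow> bool" where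
  "nzv n z \<longleftrightarrow> (\<forall>i \<in> {1..n}. z i \<noteq> 0)"

lemma mmon_add: "nzv n z \<Longrightarrow> mmon n z (a + b) = mmon n z a * mmon n z b"
  by (simp add: mmon_def nzv_def lookup_add power_int_add prod.distrib[symmetric])

lemma mmon_zero: "mmon n z 0 = 1" by (simp add: mmon_def)

lemma leval_add: "leval n (f + g) z = leval n f z + leval n g z"
  by (simp add: leval_lin lin_add)
lemma leval_diff: "leval n (f - g) z = leval n f z - leval n g z"
  by (simp add: leval_lin lin_diff)
lemma leval_uminus: "leval n (- f) z = - leval n f z"
  by (simp add: leval_lin lin_uminus)
lemma leval_zero: "leval n 0 z = 0"
  by (simp add: leval_lin lin_zero)
lemma leval_sum: "leval n (\<Sum>i\<in>I. F i) z = (\<Sum>i\<in>I. leval n (F i) z)"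
  by (simp add: leval_lin lin_sum)
lemma leval_mult: "nzv n z \<Longrightarrow> leval n (f * g) z = leval n f z * leval n g z"
  by (simp add: leval_lin lin_mult mmon_add)
lemma leval_lconst: "leval n (lconst c) z = c"
  by (simp add: leval_lin lconst_def lin_single mmon_zero)
lemma leval_one: "leval n 1 z = 1"
  using leval_lconst[of n 1 z] by (simp add: lconst_def)
lemma leval_prod: "nzv n z \<Longrightarrow> leval n (\<Prod>i\<in>I. F i) z = (\<Prod>i\<in>I. leval n (F i) z)"
  by (induct I rule: infinite_finite_induct) (simp_all add: leval_one leval_mult)

lemma leval_xpow: "j \<in> {1..n} \<Longrightarrow> leval n (xpow j c) z = z j powi c"
proof -
  assume j: "j \<in> {1..n}"
  have "mmon n z (Poly_Mapping.single j c) = (\<Prod>i\<in>{1..n}. if i = j then z j powi c else 1)"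
    unfolding mmon_def by (rule prod.cong) (auto simp: lookup_single when_def)
  also have "\<dots> = z j powi c" using j by simp
  finally show ?thesis by (simp add: leval_lin xpow_def lin_single)
qed

lemma Vset_iff: "f \<in> Vset n \<longleftrightarrow> (\<forall>e \<in> Poly_Mapping.keys f. Poly_Mapping.keys e \<subseteq> {1..n})"
  by (simp add: Vset_def)

lemma Vset_add: "f \<in> Vset n \<Longrightarrow> g \<in> Vset n \<Longrightarrow> f + g \<in> Vset n"
  unfolding Vset_iff by (metis Un_iff keys_add subsetD)

lemma Vset_uminus: "f \<in> Vset n \<Longrightarrow> - f \<in> Vset n"
  unfolding Vset_iff by simp

lemma Vset_diff: "f \<in> Vset n \<Longrightarrow> g \<in> Vset n \<Longrightarrow> f - g \<in> Vset n"
  using Vset_add[of f n "- g"] Vset_uminus[of g n] by simp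

lemma Vset_zero: "0 \<in> Vset n" by (simp add: Vset_iff)

lemma Vset_mult: "f \<in> Vset n \<Longrightarrow> g \<in> Vset n \<Longrightarrow> f * g \<in> Vset n"
  unfolding Vset_iff
proof
  fix e assume f: "\<forall>e\<in>Poly_Mapping.keys f. Poly_Mapping.keys e \<subseteq> {1..n}"
    and g: "\<forall>e\<in>Poly_Mapping.keys g. Poly_Mapping.keys e \<subseteq> {1..n}"
    and e: "e \<in> Poly_Mapping.keys (f * g)"
  from subsetD[OF keys_mult e] obtain a b where ab: "e = a + b" "a \<in> Poly_Mapping.keys f" "b \<in> Poly_Mapping.keys g"
    by blast
  have "Poly_Mapping.keys a \<subseteq> {1..n}" "Poly_Mapping.keys b \<subseteq> {1..n}" using f g ab by auto
  thus "Poly_Mapping.keys e \<subseteq> {1..n}" using ab keys_add[of a b] by auto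
qed

lemma Vset_one: "1 \<in> Vset n" by (simp add: Vset_iff)

lemma Vset_lconst: "lconst c \<in> Vset n" by (simp add: Vset_iff lconst_def)

lemma Vset_xpow: "j \<in> {1..n} \<Longrightarrow> xpow j c \<in> Vset n" by (simp add: Vset_iff xpow_def)

lemma Vset_sum: "(\<And>i. i \<in> I \<Longrightarrow> F i \<in> Vset n) \<Longrightarrow> (\<Sum>i\<in>I. F i) \<in> Vset n"
  by (induct I rule: infinite_finite_induct) (simp_all add: Vset_zero Vset_add)

lemma Vset_prod: "(\<And>i. i \<in> I \<Longrightarrow> F i \<in> Vset n) \<Longrightarrow> (\<Prod>i\<in>I. F i) \<in> Vset n"
  by (induct I rule: infinite_finite_induct) (simp_all add: Vset_one Vset_mult)

lemma msubst_Vset: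
  assumes f: "f \<in> Vset n" and \<sigma>: "\<And>j. j \<in> {1..n} \<Longrightarrow> \<sigma> j \<in> {1..n}"
  shows "msubst \<sigma> coef f \<in> Vset n"
  unfolding msubst_def
proof (rule Vset_sum)
  fix e assume e: "e \<in> Poly_Mapping.keys f"
  hence ke: "Poly_Mapping.keys e \<subseteq> {1..n}" using f by (simp add: Vset_iff)
  show "lconst (Poly_Mapping.lookup f e * coef e) * (\<Prod>j\<in>Poly_Mapping.keys e. xpow (\<sigma> j) (Poly_Mapping.lookup e j)) \<in> Vset n"
    using ke \<sigma> by (intro Vset_mult Vset_lconst Vset_prod Vset_xpow) auto
qed

lemma leval_msubst:
  assumes nz: "nzv n z" and f: "f \<in> Vset n" and \<sigma>: "\<And>j. j \<in> {1..n} \<Longrightarrow> \<sigma> j \<in> {1..n}"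
  shows "leval n (msubst \<sigma> coef f) z =
    (\<Sum>e \<in> Poly_Mapping.keys f. Poly_Mapping.lookup f e * coef e * mmon n (z \<circ> \<sigma>) e)"
  unfolding msubst_def leval_sum
proof (rule sum.cong[OF refl])
  fix e assume e: "e \<in> Poly_Mapping.keys f"
  hence ke: "Poly_Mapping.keys e \<subseteq> {1..n}" using f by (simp add: Vset_iff)
  have "(\<Prod>j\<in>Poly_Mapping.keys e. leval n (xpow (\<sigma> j) (Poly_Mapping.lookup e j)) z)
      = (\<Prod>j\<in>Poly_Mapping.keys e. z (\<sigma> j) powi Poly_Mapping.lookup e j)"
    using ke \<sigma> by (intro prod.cong refl leval_xpow) auto
  also have "\<dots> = (\<Prod>j\<in>{1..n}. z (\<sigma> j) powi Poly_Mapping.lookup e j)"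
    using ke by (intro prod.mono_neutral_left) (auto simp: in_keys_iff)
  finally show "leval n (lconst (Poly_Mapping.lookup f e * coef e) * (\<Prod>j\<in>Poly_Mapping.keys e. xpow (\<sigma> j) (Poly_Mapping.lookup e j))) z
     = Poly_Mapping.lookup f e * coef e * mmon n (z \<circ> \<sigma>) e"
    using nz by (simp add: leval_mult leval_prod leval_lconst mmon_def)
qed

lemma swp_range: "i \<in> {1..n-1} \<Longrightarrow> j \<in> {1..n} \<Longrightarrow> swp i j \<in> {1..n}"
  by (auto simp: swp_def)

lemma leval_sop:
  assumes nz: "nzv n z" and f: "f \<in> Vset n" and i: "i \<in> {1..n-1}"
  shows "leval n (sop i f) z = leval n f (z \<circ> swp i)"
  unfolding sop_def using leval_msubst[OF nz f, of "swp i" "\<lambda>_. 1"] swp_range[OF i]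
  by (simp add: leval_lin lin_def)

lemma sop_Vset: "f \<in> Vset n \<Longrightarrow> i \<in> {1..n-1} \<Longrightarrow> sop i f \<in> Vset n"
  unfolding sop_def by (rule msubst_Vset) (use swp_range[of i n] in auto)

definition omz :: "nat \<Rightarrow> nat \<Rightarrow> nat \<Rightarrow> (nat \<Rightarrow> kf) \<Rightarrow> (nat \<Rightarrow> kf)" where
  "omz n k r z = (\<lambda>j. if j = 1 then qq k r * z n else z (j - 1))"

definition omiz :: "nat \<Rightarrow> nat \<Rightarrow> nat \<Rightarrow> (nat \<Rightarrow> kf) \<Rightarrow> (nat \<Rightarrow> kf)" where
  "omiz n k r z = (\<lambda>j. if j = n then inverse (qq k r) * z 1 else z (j + 1))"

lemma prod_delta_powi:
  assumes "j0 \<in> A" "finite A"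
  shows "(\<Prod>j\<in>A. (if j = j0 then c else 1) powi (e j)) = (c::kf) powi (e j0)"
proof -
  have "(\<Prod>j\<in>A. (if j = j0 then c else 1) powi (e j)) = (\<Prod>j\<in>A. if j = j0 then c powi (e j0) else 1)"
    by (rule prod.cong) auto
  also have "\<dots> = c powi (e j0)" using assms by simp
  finally show ?thesis .
qed

lemma leval_omega:
  assumes n: "1 \<le> n" and nz: "nzv n z" and f: "f \<in> Vset n"
  shows "leval n (omega n k r f) z = leval n f (omz n k r z)"
proof -
  let ?\<sigma> = "\<lambda>j::nat. if j = 1 then n else j - 1"
  have \<sigma>: "\<And>j. j \<in> {1..n} \<Longrightarrow> ?\<sigma> j \<in> {1..n}" using n by auto
  have "leval n (omega n k r f) z = (\<Sum>e \<in> Poly_Mapping.keys f. Poly_Mapping.lookup f e * (qq k r powi Poly_Mapping.lookup e 1) * mmon n (z \<circ> ?\<sigma>) e)"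
    unfolding omega_def by (rule leval_msubst[OF nz f \<sigma>])
  also have "\<dots> = (\<Sum>e \<in> Poly_Mapping.keys f. Poly_Mapping.lookup f e * mmon n (omz n k r z) e)"
  proof (rule sum.cong[OF refl])
    fix e
    have "mmon n (omz n k r z) e = (\<Prod>j\<in>{1..n}. ((if j = 1 then qq k r else 1) * z (?\<sigma> j)) powi Poly_Mapping.lookup e j)"
      unfolding mmon_def omz_def by (rule prod.cong) auto
    also have "\<dots> = (\<Prod>j\<in>{1..n}. (if j = 1 then qq k r else 1) powi Poly_Mapping.lookup e j) * mmon n (z \<circ> ?\<sigma>) e"
      by (simp add: power_int_mult_distrib prod.distrib mmon_def)
    also have "\<dots> = qq k r powi Poly_Mapping.lookup e 1 * mmon n (z \<circ> ?\<sigma>) e"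
      using n by (subst prod_delta_powi) auto
    finally show "Poly_Mapping.lookup f e * (qq k r powi Poly_Mapping.lookup e 1) * mmon n (z \<circ> ?\<sigma>) e = Poly_Mapping.lookup f e * mmon n (omz n k r z) e"
      by simp
  qed
  finally show ?thesis by (simp add: leval_lin lin_def)
qed

lemma omega_Vset: "1 \<le> n \<Longrightarrow> f \<in> Vset n \<Longrightarrow> omega n k r f \<in> Vset n"
  unfolding omega_def by (rule msubst_Vset) auto

lemma leval_omega_inv:
  assumes n: "1 \<le> n" and nz: "nzv n z" and f: "f \<in> Vset n"
  shows "leval n (omega_inv n k r f) z = leval n f (omiz n k r z)"
proof -
  let ?\<sigma> = "\<lambda>j::nat. if j = n then 1 else j + 1"
  have \<sigma>: "\<And>j. j \<in> {1..n} \<Longrightarrow> ?\<sigma> j \<in> {1..n}" using n by auto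
  have "leval n (omega_inv n k r f) z = (\<Sum>e \<in> Poly_Mapping.keys f. Poly_Mapping.lookup f e * (qq k r powi (- Poly_Mapping.lookup e n)) * mmon n (z \<circ> ?\<sigma>) e)"
    unfolding omega_inv_def by (rule leval_msubst[OF nz f \<sigma>])
  also have "\<dots> = (\<Sum>e \<in> Poly_Mapping.keys f. Poly_Mapping.lookup f e * mmon n (omiz n k r z) e)"
  proof (rule sum.cong[OF refl])
    fix e
    have "mmon n (omiz n k r z) e = (\<Prod>j\<in>{1..n}. ((if j = n then inverse (qq k r) else 1) * z (?\<sigma> j)) powi Poly_Mapping.lookup e j)"
      unfolding mmon_def omiz_def by (rule prod.cong) auto
    also have "\<dots> = (\<Prod>j\<in>{1..n}. (if j = n then inverse (qq k r) else 1) powi Poly_Mapping.lookup e j) * mmon n (z \<circ> ?\<sigma>) e"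
      by (simp add: power_int_mult_distrib prod.distrib mmon_def)
    also have "\<dots> = inverse (qq k r) powi Poly_Mapping.lookup e n * mmon n (z \<circ> ?\<sigma>) e"
      using n by (subst prod_delta_powi) auto
    also have "\<dots> = qq k r powi (- Poly_Mapping.lookup e n) * mmon n (z \<circ> ?\<sigma>) e"
      by (simp add: power_int_minus power_int_inverse)
    finally show "Poly_Mapping.lookup f e * (qq k r powi (- Poly_Mapping.lookup e n)) * mmon n (z \<circ> ?\<sigma>) e = Poly_Mapping.lookup f e * mmon n (omiz n k r z) e"
      by simp
  qed
  finally show ?thesis by (simp add: leval_lin lin_def)
qed

lemma omega_inv_Vset: "1 \<le> n \<Longrightarrow> f \<in> Vset n \<Longrightarrow> omega_inv n k r f \<in> Vset n"
  unfolding omega_inv_def by (rule msubst_Vset) auto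


lemma xpow_add: "xpow j a * xpow j b = xpow j (a + b)"
  by (simp add: xpow_def mult_single single_add)

lemma xpow_0: "xpow j 0 = 1"
  by (simp add: xpow_def)

lemma xpow_nat: "xpow j (int m) = xpow j 1 ^ m"
proof (induct m)
  case 0 thus ?case by (simp add: xpow_0)
next
  case (Suc m)
  have "xpow j (int (Suc m)) = xpow j 1 * xpow j (int m)" by (simp add: xpow_add)
  thus ?case using Suc by simp
qed

lemma xpow_neg: "xpow j (- c) * xpow j c = 1"
  by (simp add: xpow_add xpow_0)

lemma Vset_power: "f \<in> Vset n \<Longrightarrow> f ^ m \<in> Vset n"
  by (induct m) (simp_all add: Vset_one Vset_mult)

definition divV :: "nat \<Rightarrow> lpoly \<Rightarrow> lpoly \<Rightarrow> bool" where
  "divV n d a \<longleftrightarrow> (\<exists>q \<in> Vset n. a = d * q)"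

lemma divV_zero: "divV n d 0"
  unfolding divV_def using Vset_zero by force

lemma divV_add: "divV n d a \<Longrightarrow> divV n d b \<Longrightarrow> divV n d (a + b)"
  unfolding divV_def by (metis Vset_add distrib_left)

lemma divV_uminus: "divV n d a \<Longrightarrow> divV n d (- a)"
  unfolding divV_def by (metis Vset_uminus mult_minus_right)

lemma divV_mult: "c \<in> Vset n \<Longrightarrow> divV n d a \<Longrightarrow> divV n d (c * a)"
  unfolding divV_def by (metis Vset_mult mult.left_commute)

lemma divV_mult2: "c \<in> Vset n \<Longrightarrow> divV n d a \<Longrightarrow> divV n d (a * c)"
  using divV_mult[of c n d a] by (simp add: mult.commute)

lemma divV_sum: "(\<And>i. i \<in> I \<Longrightarrow> divV n d (F i)) \<Longrightarrow> divV n d (\<Sum>i\<in>I. F i)"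
  by (induct I rule: infinite_finite_induct) (simp_all add: divV_zero divV_add)

lemma divV_prod:
  assumes "finite A"
    and "\<And>j. j \<in> A \<Longrightarrow> a j \<in> Vset n" "\<And>j. j \<in> A \<Longrightarrow> b j \<in> Vset n"
    and "\<And>j. j \<in> A \<Longrightarrow> divV n d (a j - b j)"
  shows "divV n d ((\<Prod>j\<in>A. a j) - (\<Prod>j\<in>A. b j))"
  using assms
proof (induct A rule: finite_induct)
  case empty thus ?case by (simp add: divV_zero)
next
  case (insert x F)
  have e: "(\<Prod>j\<in>insert x F. a j) - (\<Prod>j\<in>insert x F. b j)
     = a x * ((\<Prod>j\<in>F. a j) - (\<Prod>j\<in>F. b j)) + (a x - b x) * (\<Prod>j\<in>F. b j)"
    using insert(1,2) by (simp add: algebra_simps)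
  show ?case unfolding e
    by (intro divV_add divV_mult divV_mult2 insert Vset_prod) auto
qed

lemma divV_geo:
  assumes i: "i \<in> {1..n}" "i + 1 \<in> {1..n}"
  shows "divV n (xpow i 1 - xpow (i + 1) 1) (xpow i c - xpow (i + 1) c)"
proof -
  let ?X = "xpow i 1" and ?Y = "xpow (i + 1) 1"
  have XY: "?X \<in> Vset n" "?Y \<in> Vset n" using i by (simp_all add: Vset_xpow)
  have geo: "divV n (?X - ?Y) (?X ^ m - ?Y ^ m)" for m
  proof -
    have "?X ^ m - ?Y ^ m = (?X - ?Y) * (\<Sum>p<m. ?Y ^ (m - Suc p) * ?X ^ p)"
      by (rule power_diff_sumr2)
    moreover have "(\<Sum>p<m. ?Y ^ (m - Suc p) * ?X ^ p) \<in> Vset n"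
      using XY by (intro Vset_sum Vset_mult Vset_power) auto
    ultimately show ?thesis unfolding divV_def by blast
  qed
  show ?thesis
  proof (cases "c \<ge> 0")
    case True
    then obtain m where "c = int m" by (metis nonneg_int_cases)
    thus ?thesis using geo[of m] by (simp add: xpow_nat)
  next
    case False
    define m where "m = nat (- c)"
    have c: "c = - int m" using False by (simp add: m_def)
    let ?U = "xpow i (- int m)" and ?W = "xpow (i + 1) (- int m)"
    have U: "?U * ?X ^ m = 1" "?W * ?Y ^ m = 1" using xpow_neg by (simp_all add: xpow_nat[symmetric])
    have "?U - ?W = ?U * ?W * (?Y ^ m - ?X ^ m)"
    proof -
      have "?U * ?W * (?Y ^ m - ?X ^ m) = ?U * (?W * ?Y ^ m) - ?W * (?U * ?X ^ m)"
        by (simp add: algebra_simps)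
      thus ?thesis using U by simp
    qed
    also have "\<dots> = (- (?U * ?W)) * (?X ^ m - ?Y ^ m)" by (simp add: algebra_simps)
    finally have eq: "?U - ?W = (- (?U * ?W)) * (?X ^ m - ?Y ^ m)" .
    have UW: "- (?U * ?W) \<in> Vset n" using i by (intro Vset_uminus Vset_mult Vset_xpow) auto
    have "divV n (?X - ?Y) (?U - ?W)" unfolding eq by (rule divV_mult[OF UW geo])
    thus ?thesis using c by simp
  qed
qed

lemma prod_xpow_single:
  assumes "finite J"
  shows "(\<Prod>j\<in>J. xpow j (Poly_Mapping.lookup e j)) = Poly_Mapping.single (\<Sum>j\<in>J. Poly_Mapping.single j (Poly_Mapping.lookup e j)) 1"
  using assms by (induct J rule: finite_induct) (simp_all add: xpow_def mult_single)

lemma single_expand: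
  "Poly_Mapping.single e c = lconst c * (\<Prod>j\<in>Poly_Mapping.keys e. xpow j (Poly_Mapping.lookup e j))"
  by (simp add: prod_xpow_single poly_expand[of e, symmetric] lconst_def mult_single)

lemma swp_i: "swp i i = i + 1" and swp_i1: "swp i (i + 1) = i"
  by (simp_all add: swp_def)

lemma sop_diff_divV:
  assumes f: "f \<in> Vset n" and i: "i \<in> {1..n-1}"
  shows "divV n (xv i - xv (i + 1)) (sop i f - f)"
proof -
  let ?P = "\<lambda>e. (\<Prod>j\<in>Poly_Mapping.keys e. xpow j (Poly_Mapping.lookup e j))"
  let ?Q = "\<lambda>e. (\<Prod>j\<in>Poly_Mapping.keys e. xpow (swp i j) (Poly_Mapping.lookup e j))"
  have f_exp: "f = (\<Sum>e\<in>Poly_Mapping.keys f. lconst (Poly_Mapping.lookup f e) * ?P e)"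
    by (subst poly_expand) (simp add: single_expand)
  have "sop i f - f = (\<Sum>e\<in>Poly_Mapping.keys f. lconst (Poly_Mapping.lookup f e) * (?Q e - ?P e))"
    by (subst (2) f_exp) (simp add: sop_def msubst_def algebra_simps sum_subtractf)
  also have "divV n (xv i - xv (i + 1)) \<dots>"
  proof (rule divV_sum, rule divV_mult[OF Vset_lconst])
    fix e assume e: "e \<in> Poly_Mapping.keys f"
    hence ke: "Poly_Mapping.keys e \<subseteq> {1..n}" using f by (simp add: Vset_iff)
    show "divV n (xv i - xv (i + 1)) (?Q e - ?P e)"
    proof (rule divV_prod)
      fix j assume j: "j \<in> Poly_Mapping.keys e"
      hence jn: "j \<in> {1..n}" using ke by auto
      show "xpow (swp i j) (Poly_Mapping.lookup e j) \<in> Vset n"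
        using swp_range[OF i jn] by (rule Vset_xpow)
      show "xpow j (Poly_Mapping.lookup e j) \<in> Vset n" using jn by (rule Vset_xpow)
      have ii: "i \<in> {1..n}" "i + 1 \<in> {1..n}" using i by auto
      show "divV n (xv i - xv (i + 1)) (xpow (swp i j) (Poly_Mapping.lookup e j) - xpow j (Poly_Mapping.lookup e j))"
      proof (cases "j = i \<or> j = i + 1")
        case True
        thus ?thesis
        proof
          assume "j = i"
          thus ?thesis using divV_uminus[OF divV_geo[OF ii, of "Poly_Mapping.lookup e j"]]
            by (simp add: swp_i xv_def)
        next
          assume "j = i + 1"
          thus ?thesis using divV_geo[OF ii, of "Poly_Mapping.lookup e j"]
            by (simp add: swp_def xv_def)
        qed
      next
        case False
        hence "swp i j = j" by (auto simp: swp_def)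
        thus ?thesis by (simp add: divV_zero)
      qed
    qed simp
  qed
  finally show ?thesis .
qed

lemma xv_ne: "xv i - xv (i + 1) \<noteq> 0"
proof
  assume "xv i - xv (i + 1) = 0"
  hence "Poly_Mapping.lookup (xv i) (Poly_Mapping.single i 1) = Poly_Mapping.lookup (xv (i + 1)) (Poly_Mapping.single i 1)"
    by simp
  moreover have "Poly_Mapping.single i (1::int) \<noteq> Poly_Mapping.single (i + 1) 1"
  proof
    assume "Poly_Mapping.single i (1::int) = Poly_Mapping.single (i + 1) 1"
    hence "Poly_Mapping.lookup (Poly_Mapping.single i (1::int)) i = Poly_Mapping.lookup (Poly_Mapping.single (i + 1) 1) i"
      by simp
    thus False by (simp add: lookup_single)
  qed
  ultimately show False by (simp add: xv_def xpow_def lookup_single when_def)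
qed

lemma Top_char:
  assumes f: "f \<in> Vset n" and i: "i \<in> {1..n-1}"
  shows "\<exists>g \<in> Vset n. Top k r i f = lconst (sqt k r) * sop i f + lconst (sqt k r - inverse (sqt k r)) * g
            \<and> (xv i - xv (i + 1)) * g = xv (i + 1) * (sop i f - f)"
proof -
  obtain q0 where q0: "q0 \<in> Vset n" "sop i f - f = (xv i - xv (i + 1)) * q0"
    using sop_diff_divV[OF f i] unfolding divV_def by blast
  let ?g = "xv (i + 1) * q0"
  have gV: "?g \<in> Vset n" using i q0 by (intro Vset_mult) (auto simp: xv_def intro: Vset_xpow)
  have geq: "(xv i - xv (i + 1)) * ?g = xv (i + 1) * (sop i f - f)"
    by (subst q0(2)) (simp add: algebra_simps)
  have "(THE g. (xv i - xv (i + 1)) * g = xv (i + 1) * (sop i f - f)) = ?g"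
  proof (rule the_equality)
    show "(xv i - xv (i + 1)) * ?g = xv (i + 1) * (sop i f - f)" by (rule geq)
  next
    fix g assume h: "(xv i - xv (i + 1)) * g = xv (i + 1) * (sop i f - f)"
    have "(xv i - xv (i + 1)) * g = (xv i - xv (i + 1)) * ?g" by (rule trans[OF h geq[symmetric]])
    thus "g = ?g" using xv_ne[of i] mult_left_cancel by blast
  qed
  thus ?thesis using gV geq unfolding Top_def by auto
qed

definition wit :: "nat \<Rightarrow> nat \<Rightarrow> nat \<Rightarrow> nat \<Rightarrow> (nat \<Rightarrow> kf) \<Rightarrow> (nat \<Rightarrow> nat \<Rightarrow> nat) \<Rightarrow> (nat \<Rightarrow> nat \<Rightarrow> nat) \<Rightarrow> bool" where
  "wit n k r m z idx s \<longleftrightarrow>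
        inj_on (\<lambda>(l, a). idx l a) ({1..m} \<times> {1..k+1}) \<and>
        (\<forall>l \<in> {1..m}. \<forall>a \<in> {1..k+1}. idx l a \<in> {1..n}) \<and>
        (\<forall>l \<in> {1..m}. \<forall>a \<in> {1..k}.
            z (idx l (a + 1)) = z (idx l a) * tt k r * qq k r ^ s l a) \<and>
        (\<forall>l \<in> {1..m}. (\<Sum>a = 1..k. s l a) \<le> r - 2) \<and>
        (\<forall>l \<in> {1..m}. \<forall>a \<in> {1..k}. s l a = 0 \<longrightarrow> idx l a < idx l (a + 1))"

lemma Zset_iff: "z \<in> Zset n k r m \<longleftrightarrow> nzv n z \<and> (\<exists>idx s. wit n k r m z idx s)"
  unfolding Zset_def wit_def nzv_def by blast

lemma wit_inj:
  assumes w: "wit n k r m z idx s" and "l \<in> {1..m}" "l' \<in> {1..m}" "a \<in> {1..k+1}" "a' \<in> {1..k+1}"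
    and e: "idx l a = idx l' a'"
  shows "l = l' \<and> a = a'"
proof -
  have "inj_on (\<lambda>(l, a). idx l a) ({1..m} \<times> {1..k+1})" using w by (simp add: wit_def)
  from inj_onD[OF this, of "(l, a)" "(l', a')"] show ?thesis using assms by auto
qed

lemma wit_range: "wit n k r m z idx s \<Longrightarrow> l \<in> {1..m} \<Longrightarrow> a \<in> {1..k+1} \<Longrightarrow> idx l a \<in> {1..n}"
  unfolding wit_def by blast

lemma wit_eq: "wit n k r m z idx s \<Longrightarrow> l \<in> {1..m} \<Longrightarrow> a \<in> {1..k} \<Longrightarrow>
   z (idx l (a + 1)) = z (idx l a) * tt k r * qq k r ^ s l a"
  unfolding wit_def by blast

lemma wit_sum: "wit n k r m z idx s \<Longrightarrow> l \<in> {1..m} \<Longrightarrow> (\<Sum>a = 1..k. s l a) \<le> r - 2"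
  unfolding wit_def by blast

lemma wit_ord: "wit n k r m z idx s \<Longrightarrow> l \<in> {1..m} \<Longrightarrow> a \<in> {1..k} \<Longrightarrow> s l a = 0 \<Longrightarrow> idx l a < idx l (a + 1)"
  unfolding wit_def by blast

lemma wit_cong: "wit n k r m z idx s \<Longrightarrow> (\<And>i. i \<in> {1..n} \<Longrightarrow> z' i = z i) \<Longrightarrow> wit n k r m z' idx s"
proof -
  assume w: "wit n k r m z idx s" and e: "\<And>i. i \<in> {1..n} \<Longrightarrow> z' i = z i"
  have "\<forall>l \<in> {1..m}. \<forall>a \<in> {1..k}. z' (idx l (a + 1)) = z' (idx l a) * tt k r * qq k r ^ s l a"
  proof (intro ballI)
    fix l a assume l: "l \<in> {1..m}" and a: "a \<in> {1..k}"
    have "idx l (a + 1) \<in> {1..n}" "idx l a \<in> {1..n}" using wit_range[OF w l] a by auto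
    thus "z' (idx l (a + 1)) = z' (idx l a) * tt k r * qq k r ^ s l a" using e wit_eq[OF w l a] by simp
  qed
  thus ?thesis using w unfolding wit_def by blast
qed

lemma Z_cong: "z \<in> Zset n k r m \<Longrightarrow> (\<And>i. i \<in> {1..n} \<Longrightarrow> z' i = z i) \<Longrightarrow> z' \<in> Zset n k r m"
  unfolding Zset_iff nzv_def using wit_cong by metis

lemma wit_scale: "wit n k r m z idx s \<Longrightarrow> wit n k r m (\<lambda>i. c * z i) idx s"
  unfolding wit_def by (simp add: mult.assoc)

lemma Z_scale: "z \<in> Zset n k r m \<Longrightarrow> c \<noteq> 0 \<Longrightarrow> (\<lambda>i. c * z i) \<in> Zset n k r m"
  unfolding Zset_iff nzv_def using wit_scale by fastforce

lemma swp_swp: "swp i (swp i j) = j" by (simp add: swp_def)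

lemma inj_swp: "inj (swp i)"
  by (metis injI swp_swp)

lemma swp_mono: "x < y \<Longrightarrow> \<not> (x = i \<and> y = i + 1) \<Longrightarrow> swp i x < swp i y"
  by (auto simp: swp_def)

definition bad :: "nat \<Rightarrow> nat \<Rightarrow> (nat \<Rightarrow> nat \<Rightarrow> nat) \<Rightarrow> (nat \<Rightarrow> nat \<Rightarrow> nat) \<Rightarrow> nat \<Rightarrow> bool" where
  "bad k m idx s i \<longleftrightarrow> (\<exists>l \<in> {1..m}. \<exists>a \<in> {1..k}. idx l a = i \<and> idx l (a + 1) = i + 1 \<and> s l a = 0)"

lemma wit_swap:
  assumes w: "wit n k r m z idx s" and i: "i \<in> {1..n-1}" and nb: "\<not> bad k m idx s i"
  shows "wit n k r m (z \<circ> swp i) (\<lambda>l a. swp i (idx l a)) s"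
  unfolding wit_def
proof (intro conjI)
  have "inj_on (swp i \<circ> (\<lambda>(l, a). idx l a)) ({1..m} \<times> {1..k+1})"
    using w unfolding wit_def by (intro comp_inj_on) (auto intro: inj_on_subset[OF inj_swp])
  thus "inj_on (\<lambda>(l, a). swp i (idx l a)) ({1..m} \<times> {1..k + 1})"
    by (simp add: comp_def case_prod_unfold)
  show "\<forall>l\<in>{1..m}. \<forall>a\<in>{1..k + 1}. swp i (idx l a) \<in> {1..n}"
    using wit_range[OF w] swp_range[OF i] by blast
  show "\<forall>l\<in>{1..m}. \<forall>a\<in>{1..k}. (z \<circ> swp i) (swp i (idx l (a + 1))) = (z \<circ> swp i) (swp i (idx l a)) * tt k r * qq k r ^ s l a"
    using wit_eq[OF w] by (simp add: swp_swp)
  show "\<forall>l\<in>{1..m}. sum (s l) {1..k} \<le> r - 2" using wit_sum[OF w] by blast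
  show "\<forall>l\<in>{1..m}. \<forall>a\<in>{1..k}. s l a = 0 \<longrightarrow> swp i (idx l a) < swp i (idx l (a + 1))"
    using wit_ord[OF w] nb unfolding bad_def by (metis swp_mono)
qed

lemma Z_swap:
  assumes nz: "nzv n z" and w: "wit n k r m z idx s" and i: "i \<in> {1..n-1}" and nb: "\<not> bad k m idx s i"
  shows "z \<circ> swp i \<in> Zset n k r m"
  unfolding Zset_iff
proof
  show "nzv n (z \<circ> swp i)" using nz swp_range[OF i] by (auto simp: nzv_def)
  show "\<exists>idx s. wit n k r m (z \<circ> swp i) idx s" using wit_swap[OF w i nb] by blast
qed

lemma wit_chain:
  assumes w: "wit n k r m z idx s" and l: "l \<in> {1..m}" and a: "1 \<le> a" and ab: "a \<le> b"
  shows "b \<le> k + 1 \<Longrightarrow> z (idx l b) = z (idx l a) * tt k r ^ (b - a) * qq k r ^ (\<Sum>c\<in>{a..<b}. s l c)"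
  using ab
proof (induct b rule: dec_induct)
  case base thus ?case by simp
next
  case (step b)
  have b: "b \<in> {1..k}" using step a by auto
  have "z (idx l (Suc b)) = z (idx l b) * tt k r * qq k r ^ s l b"
    using wit_eq[OF w l b] by simp
  also have "\<dots> = z (idx l a) * tt k r ^ (b - a) * qq k r ^ (\<Sum>c\<in>{a..<b}. s l c) * tt k r * qq k r ^ s l b"
    using step by simp
  also have "\<dots> = z (idx l a) * tt k r ^ (Suc b - a) * qq k r ^ (\<Sum>c\<in>{a..<Suc b}. s l c)"
    using step(1) by (simp add: Suc_diff_le power_add mult_ac)
  finally show ?case .
qed

lemma wit_partial_sum:
  assumes w: "wit n k r m z idx s" and l: "l \<in> {1..m}" and a: "1 \<le> a" and b: "b \<le> k + 1"
  shows "(\<Sum>c\<in>{a..<b}. s l c) \<le> r - 2"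
proof -
  have "(\<Sum>c\<in>{a..<b}. s l c) \<le> (\<Sum>c\<in>{1..k}. s l c)"
    using a b by (intro sum_mono2) auto
  thus ?thesis using wit_sum[OF w l] by linarith
qed

lemma Z_omega:
  assumes k: "1 \<le> k" "k \<le> n - 1" and r: "2 \<le> r" and z: "z \<in> Zset n k r m"
  shows "omz n k r z \<in> Zset n k r m"
proof -
  obtain idx s where w: "wit n k r m z idx s" and nz: "nzv n z" using z Zset_iff by blast
  have n: "2 \<le> n" using k by simp
  define \<rho> where "\<rho> j = (if j = n then 1 else j + 1)" for j :: nat
  define D where "D l \<longleftrightarrow> idx l (k+1) = n" for l
  define S where "S l = (\<Sum>a=1..k. s l a)" for l
  define rot where "rot l a = (if D l then (if a = 1 then k+1 else a - 1) else a)" for l a :: nat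
  define idx' where "idx' l a = \<rho> (idx l (rot l a))" for l a
  define s' where "s' l a = (if D l then (if a = 1 then r - 2 - S l else s l (a - 1))
       else nat (int (s l a) - (if idx l a = n then 1 else 0) + (if idx l (a+1) = n then 1 else 0)))" for l a
  let ?w = "omz n k r z"
  have w\<rho>: "?w (\<rho> j) = (if j = n then qq k r * z j else z j)" if "j \<in> {1..n}" for j
    using that by (auto simp: omz_def \<rho>_def)
  have \<rho>_range: "\<rho> j \<in> {1..n}" if "j \<in> {1..n}" for j using n that by (auto simp: \<rho>_def)
  have \<rho>_inj: "j = j'" if "j \<in> {1..n}" "j' \<in> {1..n}" "\<rho> j = \<rho> j'" for j j'
    using that unfolding \<rho>_def by (cases "j = n"; cases "j' = n") auto
  have rot_range: "rot l a \<in> {1..k+1}" if "a \<in> {1..k+1}" for l a using that by (auto simp: rot_def)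
  have rot_inj: "a = a'" if "a \<in> {1..k+1}" "a' \<in> {1..k+1}" "rot l a = rot l a'" for l a a'
    using that by (auto simp: rot_def split: if_splits)
  have "?w i \<noteq> 0" if "i \<in> {1..n}" for i
  proof (cases "i = 1")
    case True
    have "z n \<noteq> 0" using nz n by (simp add: nzv_def)
    thus ?thesis using True qq_nz[of k r] by (simp add: omz_def)
  next
    case False
    hence "i - 1 \<in> {1..n}" using that by auto
    thus ?thesis using nz False by (simp add: nzv_def omz_def)
  qed
  hence nzw: "nzv n ?w" by (simp add: nzv_def)
  have Sle: "S l \<le> r - 2" if "l \<in> {1..m}" for l using wit_sum[OF w that] by (simp add: S_def)
  have Dne: "idx l a \<noteq> n" if "l \<in> {1..m}" "D l" "a \<in> {1..k}" for l a
  proof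
    assume "idx l a = n"
    hence "idx l a = idx l (k+1)" using that(2) by (simp add: D_def)
    from wit_inj[OF w that(1) that(1) _ _ this] that(3) show False by auto
  qed
  have both: "idx l (a+1) \<noteq> n" if "l \<in> {1..m}" "a \<in> {1..k}" "idx l a = n" for l a
  proof
    assume "idx l (a+1) = n"
    hence "idx l a = idx l (a+1)" using that(3) by simp
    from wit_inj[OF w that(1) that(1) _ _ this] that(2) show False by auto
  qed
  have spos: "1 \<le> s l a" if "l \<in> {1..m}" "a \<in> {1..k}" "idx l a = n" for l a
  proof (rule ccontr)
    assume "\<not> 1 \<le> s l a"
    hence "idx l a < idx l (a+1)" using wit_ord[OF w that(1,2)] by simp
    moreover have "idx l (a+1) \<in> {1..n}" using wit_range[OF w that(1)] that(2) by auto
    ultimately show False using that(3) by simp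
  qed
  have "wit n k r m ?w idx' s'"
    unfolding wit_def
  proof (intro conjI)
    show "inj_on (\<lambda>(l, a). idx' l a) ({1..m} \<times> {1..k+1})"
    proof (rule inj_onI)
      fix x y assume x: "x \<in> {1..m} \<times> {1..k+1}" and y: "y \<in> {1..m} \<times> {1..k+1}"
        and e: "(\<lambda>(l, a). idx' l a) x = (\<lambda>(l, a). idx' l a) y"
      obtain l a where xa: "x = (l, a)" by force
      obtain l' a' where ya: "y = (l', a')" by force
      have la: "l \<in> {1..m}" "a \<in> {1..k+1}" "l' \<in> {1..m}" "a' \<in> {1..k+1}" using x y xa ya by auto
      have "idx l (rot l a) = idx l' (rot l' a')"
        using \<rho>_inj[OF wit_range[OF w la(1) rot_range[OF la(2)]] wit_range[OF w la(3) rot_range[OF la(4)]]]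
          e xa ya by (simp add: idx'_def)
      from wit_inj[OF w la(1) la(3) rot_range[OF la(2)] rot_range[OF la(4)] this]
      have "l = l'" "rot l a = rot l a'" by auto
      with rot_inj[OF la(2) la(4)] show "x = y" using xa ya by auto
    qed
    show "\<forall>l\<in>{1..m}. \<forall>a\<in>{1..k + 1}. idx' l a \<in> {1..n}"
      using \<rho>_range wit_range[OF w] rot_range by (simp add: idx'_def)
    show "\<forall>l\<in>{1..m}. \<forall>a\<in>{1..k}. ?w (idx' l (a + 1)) = ?w (idx' l a) * tt k r * qq k r ^ s' l a"
    proof (intro ballI)
      fix l a assume l: "l \<in> {1..m}" and a: "a \<in> {1..k}"
      have ra: "idx l a \<in> {1..n}" "idx l (a+1) \<in> {1..n}" using wit_range[OF w l] a by auto
      show "?w (idx' l (a + 1)) = ?w (idx' l a) * tt k r * qq k r ^ s' l a"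
      proof (cases "D l")
        case True
        show ?thesis
        proof (cases "a = 1")
          case True
          have i1: "idx l 1 \<noteq> n" using Dne[OF l \<open>D l\<close>, of 1] k by auto
          have r1: "idx l 1 \<in> {1..n}" using wit_range[OF w l] by auto
          have e1: "idx' l (a+1) = \<rho> (idx l 1)" "idx' l a = \<rho> n"
            using True \<open>D l\<close> k by (auto simp: idx'_def rot_def D_def)
          have rn: "n \<in> {1..n}" using n by auto
          have ch: "z n = z (idx l 1) * tt k r ^ k * qq k r ^ S l"
          proof -
            have c1: "z (idx l (k+1)) = z (idx l 1) * tt k r ^ (k + 1 - 1) * qq k r ^ (\<Sum>c\<in>{1..<k+1}. s l c)"
              by (rule wit_chain[OF w l]) auto
            have e1: "k + 1 - 1 = k" by simp
            have e2: "(\<Sum>c\<in>{1..<k+1}. s l c) = S l" unfolding S_def by (rule sum.cong) auto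
            have e3: "idx l (k+1) = n" using \<open>D l\<close> by (simp add: D_def)
            show ?thesis using c1 by (simp only: e1 e2 e3)
          qed
          have ex: "Suc (S l + (r - 2 - S l)) = r - 1" using Sle[OF l] r by arith
          have qe: "qq k r ^ (r - 1) = qq k r * (qq k r ^ S l * qq k r ^ (r - 2 - S l))"
            by (simp only: ex[symmetric] power_add power_Suc)
          have "?w (idx' l a) * tt k r * qq k r ^ s' l a
              = qq k r * (z (idx l 1) * tt k r ^ k * qq k r ^ S l) * tt k r * qq k r ^ (r - 2 - S l)"
            using e1 w\<rho>[OF rn] ch True \<open>D l\<close> by (simp add: s'_def)
          also have "\<dots> = z (idx l 1) * (tt k r ^ (k+1) * (qq k r * (qq k r ^ S l * qq k r ^ (r - 2 - S l))))"
            by (simp add: mult_ac)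
          also have "\<dots> = z (idx l 1)" using tq_cycle[OF r, of k] qe by simp
          also have "\<dots> = ?w (idx' l (a + 1))" using e1 w\<rho>[OF r1] i1 by simp
          finally show ?thesis by simp
        next
          case False
          hence a2: "2 \<le> a" using a by auto
          have am: "a - 1 \<in> {1..k}" using a2 a by auto
          have ne: "idx l a \<noteq> n" "idx l (a - 1) \<noteq> n" using Dne[OF l \<open>D l\<close>] a am by auto
          have rr: "idx l (a - 1) \<in> {1..n}" using wit_range[OF w l] am by auto
          have e1: "idx' l (a+1) = \<rho> (idx l a)" "idx' l a = \<rho> (idx l (a - 1))"
            using False \<open>D l\<close> a by (auto simp: idx'_def rot_def)
          have "z (idx l (a - 1 + 1)) = z (idx l (a - 1)) * tt k r * qq k r ^ s l (a - 1)"
            by (rule wit_eq[OF w l am])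
          thus ?thesis using e1 w\<rho>[OF ra(1)] w\<rho>[OF rr] ne False \<open>D l\<close> a2 by (simp add: s'_def)
        qed
      next
        case False
        have e1: "idx' l (a+1) = \<rho> (idx l (a+1))" "idx' l a = \<rho> (idx l a)"
          using False by (auto simp: idx'_def rot_def)
        have we: "z (idx l (a + 1)) = z (idx l a) * tt k r * qq k r ^ s l a" by (rule wit_eq[OF w l a])
        show ?thesis
        proof (cases "idx l a = n")
          case True
          have ne: "idx l (a+1) \<noteq> n" by (rule both[OF l a True])
          have sp: "1 \<le> s l a" by (rule spos[OF l a True])
          have sd: "s' l a = s l a - 1" using False True ne sp by (simp add: s'_def)
          have "qq k r ^ s l a = qq k r * qq k r ^ (s l a - 1)" using sp
            by (metis Suc_diff_le diff_Suc_1 power_Suc)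
          thus ?thesis using e1 w\<rho>[OF ra(1)] w\<rho>[OF ra(2)] True ne we sd by (simp add: mult_ac)
        next
          case ne: False
          show ?thesis
          proof (cases "idx l (a+1) = n")
            case True
            have sd: "s' l a = s l a + 1" using False True ne by (simp add: s'_def)
            show ?thesis using e1 w\<rho>[OF ra(1)] w\<rho>[OF ra(2)] True ne we sd by (simp add: mult_ac)
          next
            case ne2: False
            have sd: "s' l a = s l a" using False ne2 ne by (simp add: s'_def)
            show ?thesis using e1 w\<rho>[OF ra(1)] w\<rho>[OF ra(2)] ne2 ne we sd by simp
          qed
        qed
      qed
    qed
    show "\<forall>l\<in>{1..m}. (\<Sum>a = 1..k. s' l a) \<le> r - 2"
    proof
      fix l assume l: "l \<in> {1..m}"
      show "(\<Sum>a = 1..k. s' l a) \<le> r - 2"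
      proof (cases "D l")
        case True
        obtain k' where k': "k = Suc k'" using k by (cases k) auto
        have "(\<Sum>a = 1..k. s' l a) = s' l 1 + (\<Sum>a = Suc 1..Suc k'. s' l a)"
          using k' by (simp add: sum.atLeast_Suc_atMost)
        also have "(\<Sum>a = Suc 1..Suc k'. s' l a) = (\<Sum>a = 1..k'. s' l (Suc a))"
          by (rule sum.shift_bounds_cl_Suc_ivl)
        also have "\<dots> = (\<Sum>a = 1..k'. s l a)" using True by (simp add: s'_def)
        also have "\<dots> \<le> S l" unfolding S_def using k' by (intro sum_mono2) auto
        finally have "(\<Sum>a = 1..k. s' l a) \<le> s' l 1 + S l" by simp
        moreover have "s' l 1 = r - 2 - S l" using True by (simp add: s'_def)
        ultimately show ?thesis using Sle[OF l] by simp
      next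
        case False
        let ?A = "{1..k}"
        let ?P = "\<lambda>a. idx l a = n" and ?Q = "\<lambda>a. idx l (a+1) = n"
        have pt: "int (s' l a) = int (s l a) - (if ?P a then 1 else 0) + (if ?Q a then 1 else 0)" if "a \<in> ?A" for a
        proof -
          have "int (s l a) - (if ?P a then 1 else 0) + (if ?Q a then 1 else 0) \<ge> 0"
            using spos[OF l that] by auto
          thus ?thesis using False by (simp add: s'_def)
        qed
        have "int (\<Sum>a\<in>?A. s' l a) = (\<Sum>a\<in>?A. int (s' l a))" by simp
        also have "\<dots> = (\<Sum>a\<in>?A. int (s l a)) - (\<Sum>a\<in>?A. if ?P a then 1 else 0) + (\<Sum>a\<in>?A. if ?Q a then 1 else 0)"
          using pt by (simp add: sum.distrib sum_subtractf)
        also have "(\<Sum>a\<in>?A. if ?P a then 1 else 0) = int (card {a\<in>?A. ?P a})"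
          by (simp add: sum.inter_filter[symmetric])
        also have "(\<Sum>a\<in>?A. if ?Q a then 1 else 0) = int (card {a\<in>?A. ?Q a})"
          by (simp add: sum.inter_filter[symmetric])
        also have "card {a\<in>?A. ?Q a} \<le> card {a\<in>?A. ?P a}"
        proof (rule card_inj_on_le[of Suc])
          show "inj_on Suc {a \<in> ?A. ?Q a}" by simp
          show "Suc ` {a \<in> ?A. ?Q a} \<subseteq> {a \<in> ?A. ?P a}"
          proof
            fix b assume "b \<in> Suc ` {a \<in> ?A. ?Q a}"
            then obtain a where a: "a \<in> ?A" "?Q a" "b = Suc a" by blast
            have "a + 1 \<noteq> k + 1" using a False by (auto simp: D_def)
            thus "b \<in> {a \<in> ?A. ?P a}" using a by auto
          qed
        qed simp
        hence "int (card {a\<in>?A. ?Q a}) \<le> int (card {a\<in>?A. ?P a})" by simp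
        finally have "int (\<Sum>a\<in>?A. s' l a) \<le> int (S l)" by (simp add: S_def)
        hence "(\<Sum>a\<in>?A. s' l a) \<le> S l" by (simp only: of_nat_le_iff)
        thus ?thesis using Sle[OF l] by simp
      qed
    qed
    show "\<forall>l\<in>{1..m}. \<forall>a\<in>{1..k}. s' l a = 0 \<longrightarrow> idx' l a < idx' l (a + 1)"
    proof (intro ballI impI)
      fix l a assume l: "l \<in> {1..m}" and a: "a \<in> {1..k}" and s0: "s' l a = 0"
      have ra: "idx l a \<in> {1..n}" "idx l (a+1) \<in> {1..n}" using wit_range[OF w l] a by auto
      show "idx' l a < idx' l (a + 1)"
      proof (cases "D l")
        case True
        show ?thesis
        proof (cases "a = 1")
          case True
          have i1: "idx l 1 \<noteq> n" using Dne[OF l \<open>D l\<close>, of 1] k by auto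
          have r1: "idx l 1 \<in> {1..n}" using wit_range[OF w l] by auto
          show ?thesis using i1 r1 True \<open>D l\<close> k by (auto simp: idx'_def rot_def D_def \<rho>_def)
        next
          case False
          hence a2: "2 \<le> a" using a by auto
          have am: "a - 1 \<in> {1..k}" using a2 a by auto
          have ne: "idx l a \<noteq> n" "idx l (a - 1) \<noteq> n" using Dne[OF l \<open>D l\<close>] a am by auto
          have "s l (a - 1) = 0" using s0 False \<open>D l\<close> by (simp add: s'_def)
          hence "idx l (a - 1) < idx l (a - 1 + 1)" by (rule wit_ord[OF w l am])
          thus ?thesis using ne False \<open>D l\<close> a2 by (simp add: idx'_def rot_def \<rho>_def)
        qed
      next
        case False
        show ?thesis
        proof (cases "idx l a = n")
          case True
          have ne: "idx l (a+1) \<noteq> n" by (rule both[OF l a True])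
          thus ?thesis using True False ra(2) by (simp add: idx'_def rot_def \<rho>_def)
        next
          case ne: False
          show ?thesis
          proof (cases "idx l (a+1) = n")
            case True
            hence "s' l a = s l a + 1" using False ne by (simp add: s'_def)
            thus ?thesis using s0 by simp
          next
            case ne2: False
            have "s l a = 0" using s0 False ne ne2 by (simp add: s'_def)
            hence "idx l a < idx l (a + 1)" by (rule wit_ord[OF w l a])
            thus ?thesis using ne ne2 False by (simp add: idx'_def rot_def \<rho>_def)
          qed
        qed
      qed
    qed
  qed
  thus ?thesis using nzw Zset_iff by blast
qed


lemma omz_iter:
  assumes "j \<le> n" "i \<in> {1..n}"
  shows "((omz n k r) ^^ j) z i = (if i \<le> j then qq k r * z (n - j + i) else z (i - j))"
  using assms
proof (induct j arbitrary: i)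
  case 0 thus ?case by simp
next
  case (Suc j)
  show ?case
  proof (cases "i = 1")
    case True
    have "((omz n k r) ^^ Suc j) z i = qq k r * ((omz n k r) ^^ j) z n"
      using True by (simp add: omz_def)
    also have "((omz n k r) ^^ j) z n = z (n - j)" using Suc by simp
    finally show ?thesis using True Suc by (simp add: Suc_diff_Suc)
  next
    case False
    have "((omz n k r) ^^ Suc j) z i = ((omz n k r) ^^ j) z (i - 1)"
      using False by (simp add: omz_def)
    also have "\<dots> = (if i - 1 \<le> j then qq k r * z (n - j + (i - 1)) else z (i - 1 - j))"
      by (rule Suc.hyps) (use Suc.prems False in auto)
    finally show ?thesis using False Suc by auto
  qed
qed

lemma Z_iter:
  assumes k: "1 \<le> k" "k \<le> n - 1" and r: "2 \<le> r" and z: "z \<in> Zset n k r m"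
  shows "((omz n k r) ^^ j) z \<in> Zset n k r m"
  by (induct j) (simp_all add: z Z_omega[OF k r])

lemma Z_omiz:
  assumes k: "1 \<le> k" "k \<le> n - 1" and r: "2 \<le> r" and z: "z \<in> Zset n k r m"
  shows "omiz n k r z \<in> Zset n k r m"
proof -
  let ?z0 = "\<lambda>i. inverse (qq k r) * z i"
  have z0: "?z0 \<in> Zset n k r m" using Z_scale[OF z] qq_nz by simp
  have zi: "((omz n k r) ^^ (n - 1)) ?z0 \<in> Zset n k r m" by (rule Z_iter[OF k r z0])
  show ?thesis
  proof (rule Z_cong[OF zi])
    fix i assume i: "i \<in> {1..n}"
    have "((omz n k r) ^^ (n - 1)) ?z0 i = (if i \<le> n - 1 then qq k r * ?z0 (n - (n - 1) + i) else ?z0 (i - (n - 1)))"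
      using i by (intro omz_iter) auto
    thus "omiz n k r z i = ((omz n k r) ^^ (n - 1)) ?z0 i"
      using i k qq_nz[of k r] by (auto simp: omiz_def)
  qed
qed

lemma laurent_zero:
  fixes c :: "'e \<Rightarrow> kf" and d :: "'e \<Rightarrow> int"
  assumes E: "finite E"
    and h: "\<And>x. x \<noteq> 0 \<Longrightarrow> x \<noteq> 1 \<Longrightarrow> (\<Sum>e\<in>E. c e * x powi d e) = 0"
  shows "(\<Sum>e\<in>E. c e) = 0"
proof -
  define N where "N = (\<Sum>e\<in>E. nat (- d e))"
  have Nge: "d e + int N \<ge> 0" if "e \<in> E" for e
  proof -
    have "nat (- d e) \<le> N" unfolding N_def using E that by (intro member_le_sum) auto
    thus ?thesis by linarith
  qed
  define p where "p = (\<Sum>e\<in>E. monom (c e) (nat (d e + int N)))"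
  have pv: "poly p x = x powi int N * (\<Sum>e\<in>E. c e * x powi d e)" if "x \<noteq> 0" for x
  proof -
    have "poly p x = (\<Sum>e\<in>E. c e * x ^ nat (d e + int N))"
      by (simp add: p_def poly_sum poly_monom)
    also have "\<dots> = (\<Sum>e\<in>E. c e * x powi (d e + int N))"
    proof (rule sum.cong[OF refl])
      fix e assume "e \<in> E"
      hence "int (nat (d e + int N)) = d e + int N" using Nge by simp
      hence "x powi (d e + int N) = x ^ nat (d e + int N)" by (metis power_int_of_nat)
      thus "c e * x ^ nat (d e + int N) = c e * x powi (d e + int N)" by simp
    qed
    also have "\<dots> = (\<Sum>e\<in>E. c e * x powi d e * x powi int N)"
      using that by (simp add: power_int_add mult_ac)
    also have "\<dots> = x powi int N * (\<Sum>e\<in>E. c e * x powi d e)"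
      by (simp add: sum_distrib_left mult_ac)
    finally show ?thesis .
  qed
  have p0: "p = 0"
  proof (rule ccontr)
    assume "p \<noteq> 0"
    hence fin: "finite {x. poly p x = 0}" by (rule poly_roots_finite)
    have "UNIV - {0, 1} \<subseteq> {x. poly p x = 0}" using pv h by auto
    hence "finite (UNIV - {0, 1} :: kf set)" using fin finite_subset by blast
    hence "finite (UNIV :: kf set)" by simp
    thus False using infinite_kf by blast
  qed
  have "poly p 1 = (\<Sum>e\<in>E. c e)" using pv[of 1] by simp
  thus ?thesis using p0 by simp
qed

lemma prod_powi_same: "x \<noteq> 0 \<Longrightarrow> (\<Prod>j\<in>A. (x::kf) powi h j) = x powi (\<Sum>j\<in>A. h j)"
  by (induct A rule: infinite_finite_induct) (simp_all add: power_int_add)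

definition scaleC :: "nat set \<Rightarrow> kf \<Rightarrow> (nat \<Rightarrow> kf) \<Rightarrow> (nat \<Rightarrow> kf)" where
  "scaleC C x z = (\<lambda>j. if j \<in> C then x * z j else z j)"

lemma mmon_scaleC:
  assumes "x \<noteq> 0"
  shows "mmon n (scaleC C x z) e = mmon n z e * x powi (\<Sum>j\<in>{1..n}. if j \<in> C then Poly_Mapping.lookup e j else 0)"
proof -
  have "mmon n (scaleC C x z) e = (\<Prod>j\<in>{1..n}. ((if j \<in> C then x else 1) * z j) powi Poly_Mapping.lookup e j)"
    unfolding mmon_def scaleC_def by (rule prod.cong) auto
  also have "\<dots> = (\<Prod>j\<in>{1..n}. (if j \<in> C then x else 1) powi Poly_Mapping.lookup e j) * mmon n z e"
    by (simp add: power_int_mult_distrib prod.distrib mmon_def)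
  also have "(\<Prod>j\<in>{1..n}. (if j \<in> C then x else 1) powi Poly_Mapping.lookup e j)
      = (\<Prod>j\<in>{1..n}. x powi (if j \<in> C then Poly_Mapping.lookup e j else 0))"
    by (rule prod.cong) auto
  also have "\<dots> = x powi (\<Sum>j\<in>{1..n}. if j \<in> C then Poly_Mapping.lookup e j else 0)"
    using assms by (rule prod_powi_same)
  finally show ?thesis by simp
qed

lemma leval_scaleC_zero:
  assumes h: "\<And>x. x \<noteq> 0 \<Longrightarrow> x \<noteq> 1 \<Longrightarrow> leval n g (scaleC C x z) = 0"
  shows "leval n g z = 0"
proof -
  let ?c = "\<lambda>e. Poly_Mapping.lookup g e * mmon n z e"
  let ?d = "\<lambda>e. (\<Sum>j\<in>{1..n}. if j \<in> C then Poly_Mapping.lookup e j else 0)"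
  have "(\<Sum>e\<in>Poly_Mapping.keys g. ?c e) = 0"
  proof (rule laurent_zero)
    fix x :: kf assume x: "x \<noteq> 0" "x \<noteq> 1"
    have "(\<Sum>e\<in>Poly_Mapping.keys g. ?c e * x powi ?d e) = leval n g (scaleC C x z)"
      unfolding leval_lin lin_def using x by (simp add: mmon_scaleC mult_ac)
    thus "(\<Sum>e\<in>Poly_Mapping.keys g. ?c e * x powi ?d e) = 0" using h x by simp
  qed simp
  thus ?thesis by (simp add: leval_lin lin_def)
qed

lemma wit_scaleC:
  assumes w: "wit n k r m z idx s"
    and C: "\<And>l a. l \<in> {1..m} \<Longrightarrow> a \<in> {1..k} \<Longrightarrow> (idx l (a + 1) \<in> C \<longleftrightarrow> idx l a \<in> C)"
  shows "wit n k r m (scaleC C x z) idx s"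
proof -
  have "\<forall>l \<in> {1..m}. \<forall>a \<in> {1..k}. scaleC C x z (idx l (a + 1)) = scaleC C x z (idx l a) * tt k r * qq k r ^ s l a"
    using wit_eq[OF w] C by (auto simp: scaleC_def mult.assoc)
  thus ?thesis using w unfolding wit_def by blast
qed

lemma nzv_scaleC: "nzv n z \<Longrightarrow> x \<noteq> 0 \<Longrightarrow> nzv n (scaleC C x z)"
  by (simp add: nzv_def scaleC_def)

lemma good_C:
  assumes k: "1 \<le> k" and r: "2 \<le> r" and nz: "nzv n z" and w: "wit n k r m z idx s"
    and i: "i \<in> {1..n-1}" and zi: "z i = z (i + 1)"
  shows "\<exists>C. i \<in> C \<and> i + 1 \<notin> C \<and>
     (\<forall>l a. l \<in> {1..m} \<longrightarrow> a \<in> {1..k} \<longrightarrow> (idx l (a + 1) \<in> C \<longleftrightarrow> idx l a \<in> C))"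
proof (cases "\<exists>l\<in>{1..m}. \<exists>a\<in>{1..k+1}. idx l a = i")
  case True
  then obtain l0 a0 where l0: "l0 \<in> {1..m}" and a0: "a0 \<in> {1..k+1}" and ia: "idx l0 a0 = i" by blast
  let ?C = "idx l0 ` {1..k+1}"
  have "i + 1 \<notin> ?C"
  proof
    assume "i + 1 \<in> ?C"
    then obtain b0 where b0: "b0 \<in> {1..k+1}" and ib: "idx l0 b0 = i + 1" by (metis imageE)
    have zin: "z i \<noteq> 0" using nz i by (auto simp: nzv_def)
    have ne: "a0 \<noteq> b0" using ia ib by auto
    have gen: "False" if "a \<in> {1..k+1}" "b \<in> {1..k+1}" "a < b" "z (idx l0 a) = z (idx l0 b)" "z (idx l0 a) \<noteq> 0" for a b
    proof -
      have "z (idx l0 b) = z (idx l0 a) * tt k r ^ (b - a) * qq k r ^ (\<Sum>c\<in>{a..<b}. s l0 c)"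
        using that by (intro wit_chain[OF w l0]) auto
      hence "tt k r ^ (b - a) * qq k r ^ (\<Sum>c\<in>{a..<b}. s l0 c) = 1" using that(4,5) by simp
      moreover have "(\<Sum>c\<in>{a..<b}. s l0 c) \<le> r - 2" using that by (intro wit_partial_sum[OF w l0]) auto
      ultimately show False using tq_ne1[OF r, of "b - a"] that(3) by simp
    qed
    show False
    proof (cases "a0 < b0")
      case True thus False using gen[OF a0 b0 True] ia ib zi zin by simp
    next
      case False hence "b0 < a0" using ne by simp
      thus False using gen[OF b0 a0] ia ib zi zin by simp
    qed
  qed
  moreover have "i \<in> ?C" using a0 ia by force
  moreover have "idx l (a + 1) \<in> ?C \<longleftrightarrow> idx l a \<in> ?C" if "l \<in> {1..m}" "a \<in> {1..k}" for l a
  proof (cases "l = l0")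
    case True thus ?thesis using that by auto
  next
    case False
    have "idx l b \<notin> ?C" if "b \<in> {1..k+1}" for b
    proof
      assume "idx l b \<in> ?C"
      then obtain c where c: "c \<in> {1..k+1}" "idx l b = idx l0 c" by (metis imageE)
      from wit_inj[OF w \<open>l \<in> {1..m}\<close> l0 that c(1) c(2)] False show False by simp
    qed
    thus ?thesis using that(2) by auto
  qed
  ultimately show ?thesis by blast
next
  case False
  have "i + 1 \<notin> {i}" by simp
  moreover have "idx l (a + 1) \<in> {i} \<longleftrightarrow> idx l a \<in> {i}" if "l \<in> {1..m}" "a \<in> {1..k}" for l a
    using False that by force
  ultimately show ?thesis by blast
qed


lemma Iideal_iff: "f \<in> Iideal n k r m \<longleftrightarrow> f \<in> Vset n \<and> (\<forall>z\<in>Zset n k r m. leval n f z = 0)"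
  by (simp add: Iideal_def)

lemma Top_Z:
  assumes k: "1 \<le> k" and r: "2 \<le> r" and f: "f \<in> Iideal n k r m" and i: "i \<in> {1..n-1}"
    and z: "z \<in> Zset n k r m"
  shows "leval n (Top k r i f) z = 0"
proof -
  have fV: "f \<in> Vset n" and fz: "\<And>w. w \<in> Zset n k r m \<Longrightarrow> leval n f w = 0"
    using f by (auto simp: Iideal_def)
  obtain g where gV: "g \<in> Vset n"
    and T: "Top k r i f = lconst (sqt k r) * sop i f + lconst (sqt k r - inverse (sqt k r)) * g"
    and ge: "(xv i - xv (i+1)) * g = xv (i+1) * (sop i f - f)"
    using Top_char[OF fV i] by blast
  have ii: "i \<in> {1..n}" "i+1 \<in> {1..n}" using i by auto
  have gw: "(w i - w (i+1)) * leval n g w = w (i+1) * (leval n f (w \<circ> swp i) - leval n f w)"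
    if w: "nzv n w" for w
  proof -
    have "leval n ((xv i - xv (i+1)) * g) w = leval n (xv (i+1) * (sop i f - f)) w" using ge by simp
    thus ?thesis using w ii
      by (simp add: leval_mult leval_diff xv_def leval_xpow leval_sop[OF w fV i] del: One_nat_def)
  qed
  obtain idx s where nz: "nzv n z" and w: "wit n k r m z idx s" using z Zset_iff by blast
  have Tz: "leval n (Top k r i f) z = sqt k r * leval n f (z \<circ> swp i) + (sqt k r - inverse (sqt k r)) * leval n g z"
    using nz by (simp add: T leval_add leval_mult leval_lconst leval_sop[OF nz fV i])
  have f0: "leval n f z = 0" using fz z .
  show ?thesis
  proof (cases "bad k m idx s i")
    case True
    then obtain l a where l: "l \<in> {1..m}" and a: "a \<in> {1..k}"
      and e: "idx l a = i" "idx l (a+1) = i+1" "s l a = 0" unfolding bad_def by blast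
    have zr: "z (i+1) = z i * tt k r" using wit_eq[OF w l a] e by simp
    let ?F = "leval n f (z \<circ> swp i)" and ?G = "leval n g z" and ?x = "sqt k r"
    have zin: "z i \<noteq> 0" using nz ii by (simp add: nzv_def)
    have x0: "?x \<noteq> 0" by (rule sqt_nz)
    have t1: "1 - ?x^2 \<noteq> 0" using tt_ne1[OF r, of k] by (simp add: tt_def)
    have "(z i - z i * tt k r) * ?G = z i * tt k r * ?F" using gw[OF nz] zr f0 by simp
    hence "z i * ((1 - ?x^2) * ?G) = z i * (?x^2 * ?F)" by (simp add: tt_def algebra_simps)
    hence G: "(1 - ?x^2) * ?G = ?x^2 * ?F" using zin by simp
    hence G': "?G = ?x^2 * ?F / (1 - ?x^2)" using t1 by (simp add: field_simps)
    have "?x * ?F + (?x - inverse ?x) * (?x^2 * ?F / (1 - ?x^2)) = 0"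
    proof -
      have ih: "inverse ?x * ?x^2 = ?x" using x0 by (simp add: power2_eq_square)
      have "(?x - inverse ?x) * ?x^2 = ?x * ?x^2 - inverse ?x * ?x^2" by (simp only: left_diff_distrib)
      also have "\<dots> = - (?x * (1 - ?x^2))" unfolding ih by (simp add: algebra_simps)
      finally have "(?x - inverse ?x) * ?x^2 = - (?x * (1 - ?x^2))" .
      note eq = this
      have "(?x - inverse ?x) * (?x^2 * ?F / (1 - ?x^2)) = ((?x - inverse ?x) * ?x^2) * ?F / (1 - ?x^2)"
        by (simp only: times_divide_eq_right mult.assoc)
      also have "\<dots> = - (?x * (1 - ?x^2)) * ?F / (1 - ?x^2)" by (simp only: eq)
      also have "- (?x * (1 - ?x^2)) * ?F = (- (?x * ?F)) * (1 - ?x^2)" by (simp add: algebra_simps)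
      also have "(- (?x * ?F)) * (1 - ?x^2) / (1 - ?x^2) = - (?x * ?F)"
        using t1 by (rule nonzero_mult_div_cancel_right)
      finally have h: "(?x - inverse ?x) * (?x^2 * ?F / (1 - ?x^2)) = - (?x * ?F)" .
      show ?thesis unfolding h by simp
    qed
    thus ?thesis using Tz G' by simp
  next
    case nb: False
    have zs: "z \<circ> swp i \<in> Zset n k r m" by (rule Z_swap[OF nz w i nb])
    hence F0: "leval n f (z \<circ> swp i) = 0" by (rule fz)
    have G0: "leval n g z = 0"
    proof (cases "z i = z (i+1)")
      case False
      have "(z i - z (i+1)) * leval n g z = 0" using gw[OF nz] F0 f0 by simp
      thus ?thesis using False by simp
    next
      case True
      obtain C where C: "i \<in> C" "i+1 \<notin> C"
        "\<forall>l a. l \<in> {1..m} \<longrightarrow> a \<in> {1..k} \<longrightarrow> (idx l (a + 1) \<in> C \<longleftrightarrow> idx l a \<in> C)"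
        using good_C[OF k r nz w i True] by blast
      show ?thesis
      proof (rule leval_scaleC_zero[of n g C z])
        fix x :: kf assume x: "x \<noteq> 0" "x \<noteq> 1"
        let ?zx = "scaleC C x z"
        have nzx: "nzv n ?zx" using nz x(1) by (rule nzv_scaleC)
        have wx: "wit n k r m ?zx idx s" using C(3) by (intro wit_scaleC[OF w]) auto
        have zx: "?zx \<in> Zset n k r m" using nzx wx Zset_iff by blast
        have zxs: "?zx \<circ> swp i \<in> Zset n k r m" by (rule Z_swap[OF nzx wx i nb])
        have "(?zx i - ?zx (i+1)) * leval n g ?zx = 0" using gw[OF nzx] fz[OF zx] fz[OF zxs] by simp
        moreover have "?zx i - ?zx (i+1) \<noteq> 0"
        proof -
          have zin: "z i \<noteq> 0" using nz ii by (simp add: nzv_def)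
          have "?zx i - ?zx (i+1) = (x - 1) * z i" using C(1,2) True by (simp add: scaleC_def algebra_simps)
          thus ?thesis using x zin by simp
        qed
        ultimately show "leval n g ?zx = 0" by simp
      qed
    qed
    show ?thesis using Tz F0 G0 by simp
  qed
qed

lemma I_add: "f \<in> Iideal n k r m \<Longrightarrow> g \<in> Iideal n k r m \<Longrightarrow> f + g \<in> Iideal n k r m"
  by (simp add: Iideal_iff Vset_add leval_add)

lemma I_lmult: "c \<in> Vset n \<Longrightarrow> f \<in> Iideal n k r m \<Longrightarrow> c * f \<in> Iideal n k r m"
  unfolding Iideal_iff using Vset_mult leval_mult Zset_iff by fastforce

lemma I_diff: "f \<in> Iideal n k r m \<Longrightarrow> g \<in> Iideal n k r m \<Longrightarrow> f - g \<in> Iideal n k r m"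
  by (simp add: Iideal_iff Vset_diff leval_diff)

lemma I_Top:
  assumes k: "1 \<le> k" and r: "2 \<le> r" and f: "f \<in> Iideal n k r m" and i: "i \<in> {1..n-1}"
  shows "Top k r i f \<in> Iideal n k r m"
proof -
  have fV: "f \<in> Vset n" using f by (simp add: Iideal_iff)
  obtain g where gV: "g \<in> Vset n"
    and T: "Top k r i f = lconst (sqt k r) * sop i f + lconst (sqt k r - inverse (sqt k r)) * g"
    using Top_char[OF fV i] by blast
  have "Top k r i f \<in> Vset n" unfolding T
    by (intro Vset_add Vset_mult Vset_lconst sop_Vset[OF fV i] gV)
  thus ?thesis using Top_Z[OF k r f i] by (simp add: Iideal_iff)
qed

lemma I_Tinv:
  assumes k: "1 \<le> k" and r: "2 \<le> r" and f: "f \<in> Iideal n k r m" and i: "i \<in> {1..n-1}"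
  shows "Tinv k r i f \<in> Iideal n k r m"
  unfolding Tinv_def by (intro I_diff I_Top[OF k r f i] I_lmult[OF Vset_lconst f])

lemma I_omega:
  assumes k: "1 \<le> k" "k \<le> n - 1" and r: "2 \<le> r" and f: "f \<in> Iideal n k r m"
  shows "omega n k r f \<in> Iideal n k r m"
proof -
  have n: "1 \<le> n" using k by simp
  have fV: "f \<in> Vset n" using f by (simp add: Iideal_iff)
  show ?thesis unfolding Iideal_iff
  proof
    show "omega n k r f \<in> Vset n" by (rule omega_Vset[OF n fV])
    show "\<forall>z\<in>Zset n k r m. leval n (omega n k r f) z = 0"
    proof
      fix z assume z: "z \<in> Zset n k r m"
      have "nzv n z" using z Zset_iff by blast
      hence "leval n (omega n k r f) z = leval n f (omz n k r z)" by (rule leval_omega[OF n _ fV])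
      also have "\<dots> = 0" using f Z_omega[OF k r z] by (simp add: Iideal_iff)
      finally show "leval n (omega n k r f) z = 0" .
    qed
  qed
qed

lemma I_omega_inv:
  assumes k: "1 \<le> k" "k \<le> n - 1" and r: "2 \<le> r" and f: "f \<in> Iideal n k r m"
  shows "omega_inv n k r f \<in> Iideal n k r m"
proof -
  have n: "1 \<le> n" using k by simp
  have fV: "f \<in> Vset n" using f by (simp add: Iideal_iff)
  show ?thesis unfolding Iideal_iff
  proof
    show "omega_inv n k r f \<in> Vset n" by (rule omega_inv_Vset[OF n fV])
    show "\<forall>z\<in>Zset n k r m. leval n (omega_inv n k r f) z = 0"
    proof
      fix z assume z: "z \<in> Zset n k r m"
      have "nzv n z" using z Zset_iff by blast
      hence "leval n (omega_inv n k r f) z = leval n f (omiz n k r z)" by (rule leval_omega_inv[OF n _ fV])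
      also have "\<dots> = 0" using f Z_omiz[OF k r z] by (simp add: Iideal_iff)
      finally show "leval n (omega_inv n k r f) z = 0" .
    qed
  qed
qed

lemma I_foldr:
  "(\<forall>h \<in> set hs. \<forall>f. f \<in> Iideal n k r m \<longrightarrow> h f \<in> Iideal n k r m) \<Longrightarrow>
   f \<in> Iideal n k r m \<Longrightarrow> foldr (\<circ>) hs id f \<in> Iideal n k r m"
  by (induct hs arbitrary: f) auto

lemma I_comp: "(\<And>f. f \<in> Iideal n k r m \<Longrightarrow> a f \<in> Iideal n k r m) \<Longrightarrow>
  (\<And>f. f \<in> Iideal n k r m \<Longrightarrow> b f \<in> Iideal n k r m) \<Longrightarrow>
  f \<in> Iideal n k r m \<Longrightarrow> (a \<circ> b) f \<in> Iideal n k r m"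
  by simp

theorem theorem6p1:
  fixes n k r m :: nat
  assumes "1 \<le> k" and "k \<le> n - 1" and "2 \<le> r" and "1 \<le> m"
    and "h \<in> hecke_ops n k r" and "f \<in> Iideal n k r m"
  shows "h f \<in> Iideal n k r m"
  using assms(5,6)
proof (induction arbitrary: f rule: hecke_ops.induct)
  case (gen_X i)
  thus ?case unfolding Xop_def by (intro I_lmult Vset_xpow)
next
  case (gen_Xinv i)
  thus ?case unfolding Xinv_def by (intro I_lmult Vset_xpow)
next
  case (gen_T j)
  thus ?case using I_Top[OF assms(1,3)] by blast
next
  case (gen_Y i)
  have T: "\<forall>h \<in> set (map (Top k r) [i..<n]). \<forall>f. f \<in> Iideal n k r m \<longrightarrow> h f \<in> Iideal n k r m"
    using I_Top[OF assms(1,3)] gen_Y by auto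
  have Ti: "\<forall>h \<in> set (map (Tinv k r) [1..<i]). \<forall>f. f \<in> Iideal n k r m \<longrightarrow> h f \<in> Iideal n k r m"
    using I_Tinv[OF assms(1,3)] gen_Y by auto
  show ?case unfolding Yop_def
    by (rule I_comp[OF I_comp[OF I_foldr[OF T] I_omega[OF assms(1,2,3)]] I_foldr[OF Ti] gen_Y.prems])
next
  case (gen_Yinv i)
  have T: "\<forall>h \<in> set (map (Top k r) (rev [1..<i])). \<forall>f. f \<in> Iideal n k r m \<longrightarrow> h f \<in> Iideal n k r m"
    using I_Top[OF assms(1,3)] gen_Yinv by auto
  have Ti: "\<forall>h \<in> set (map (Tinv k r) (rev [i..<n])). \<forall>f. f \<in> Iideal n k r m \<longrightarrow> h f \<in> Iideal n k r m"
    using I_Tinv[OF assms(1,3)] gen_Yinv by auto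
  show ?case unfolding Yinv_def
    by (rule I_comp[OF I_comp[OF I_foldr[OF T] I_omega_inv[OF assms(1,2,3)]] I_foldr[OF Ti] gen_Yinv.prems])
next
  case (scal c)
  thus ?case by (intro I_lmult Vset_lconst)
next
  case (add h1 h2)
  thus ?case by (intro I_add) auto
next
  case (comp h1 h2)
  thus ?case by auto
qed

end
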